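(* Let $[a,b]\subset\mathbb R$ and $\mathcal J=\sum_{j=0}^{m}P_j\partial_z^j$ with constant $P_j\in\mathbb R^{n\times n}$, $P_j=(-1)^{j+1}P_j^\top$. Let $\mathcal G_R=\sum_{k=0}^{m_g}G_k\partial_z^k$ with $G_k\in\mathbb R^{n\times d_g}$, let $\mathcal G_R^*$ be its formal $L^2$-adjoint, and let $R\in C^\infty([a,b],\mathbb R^{d_g\times d_g})$ satisfy $\langle f,Rf\rangle_{L^2([a,b],\mathbb R^{d_g})}\ge0$ for all $f\in L^2([a,b],\mathbb R^{d_g})$. Let $\mathcal I=\{(i_1,j_1),\ldots,(i_l,j_l)\}\subset[1:n]\times[0:m_d]$ be distinct index pairs with $j_1\le\cdots\le j_l$, $H:\mathbb R^l\to\mathbb R$ smooth, and $\mathcal H(x)=\int_a^bH(\partial_z^{j_1}x_{i_1},\ldots,\partial_z^{j_l}x_{i_l})\,\mathrm dz$. Let $x$ be a sufficiently smooth solution of the dissipative Hamiltonian system $\dot x=(\mathcal J-\mathcal G_RR\mathcal G_R^* )\,\delta_x\mathcal H(x)$. Define $\bar x=(\partial_z^{j_1}x_{i_1},\ldots,\partial_z^{j_l}x_{i_l})^\top$ and $\bar{\mathcal H}(\bar x)=\int_a^bH(\bar x_1,\ldots,\bar x_l)\,\mathrm dz$ with $\bar x_1,\ldots,\bar x_l$ regarded as independent functions. Then $\bar x$ satisfies the dissipative Hamiltonian system $$\frac{\mathrm d}{\mathrm dt}\bar x=(\mathbb J-\mathbb G_RR\mathbb G_R^* )\,\delta_{\bar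 x}\bar{\mathcal H}(\bar x),$$ where $\mathbb J$ is the formally skew-adjoint $l\times l$ operator with entries $\mathbb J_{pq}=\partial_z^{j_p}\mathcal J_{i_pi_q}(-\partial_z)^{j_q}$, and $$\mathbb G_R=D_+\Big(\sum_{k=0}^{m_g}\begin{pmatrix}(G_k)_{i_1*}\\ \vdots\\ (G_k)_{i_l*}\end{pmatrix}\partial_z^k\Big),\qquad D_+=\operatorname{diag}(\partial_z^{j_1},\ldots,\partial_z^{j_l}),$$ with $\mathbb G_R^*$ its formal $L^2$-adjoint.
   Context: $\mathcal J_{ik}$ denotes the scalar operator $\sum_j(P_j)_{ik}\partial_z^j$ and $(G_k)_{i*}$ the $i$-th row of $G_k$. The variational derivative $\delta_x\mathcal H(x)$ is defined by $\frac{d}{d\varepsilon}\big|_{\varepsilon=0}\mathcal H(x+\varepsilon\eta)=\int_a^b\langle\delta_x\mathcal H(x),\eta\rangle_{\mathbb R^n}\,\mathrm dz$ for all $\eta\in H_0^{m_d}([a,b],\mathbb R^n)$; for $\bar{\mathcal H}$, $\delta_{\bar x}\bar{\mathcal H}(\bar x)=(\partial H/\partial y_1(\bar x),\ldots,\partial H/\partial y_l(\bar x))^\top$. Formal skew-adjointness means $\int_a^b\langle e,\mathbb Jf\rangle\,\mathrm dz=-\int_a^b\langle\mathbb Je,f\rangle\,\mathrm dz$ for smooth compactly supported $e,f$. *)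

theory Defs
  imports "HOL-Analysis.Analysis"
begin

definition Dz :: "nat \<Rightarrow> (real \<Rightarrow> real) \<Rightarrow> real \<Rightarrow> real" where
  "Dz k f = (deriv ^^ k) f"

definition Cinf_on :: "real set \<Rightarrow> (real \<Rightarrow> real) \<Rightarrow> bool" where
  "Cinf_on S g \<longleftrightarrow> (\<exists>D::nat \<Rightarrow> real \<Rightarrow> real. D 0 = g \<and>
     (\<forall>k. \<forall>z\<in>S. (D k has_real_derivative D (Suc k) z) (at z within S)))"

text \<open>Joint C-infinity of f(t,z) on an open set U: D p q stands for the
  partial derivative of order p in t and q in z.\<close>
definition Cinf2_on :: "(real \<times> real) set \<Rightarrow> (real \<Rightarrow> real \<Rightarrow> real) \<Rightarrow> bool" where
  "Cinf2_on U f \<longleftrightarrow> (\<exists>D::nat \<Rightarrow> nat \<Rightarrow> real \<Rightarrow> real \<Rightarrow> real. D 0 0 = f \<and>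
     (\<forall>p q. \<forall>y\<in>U. ((\<lambda>w. D p q (fst w) (snd w)) has_derivative
        (\<lambda>h. fst h * D (Suc p) q (fst y) (snd y) + snd h * D p (Suc q) (fst y) (snd y))) (at y)))"

definition Cinf_Rl :: "(real ^ 'l \<Rightarrow> real) \<Rightarrow> bool" where
  "Cinf_Rl H \<longleftrightarrow> (\<exists>D::'l list \<Rightarrow> real ^ 'l \<Rightarrow> real. D [] = H \<and>
     (\<forall>ds y p. ((\<lambda>s. D ds (y + s *\<^sub>R axis p 1)) has_real_derivative D (p # ds) y) (at 0)) \<and>
     (\<forall>ds. continuous_on UNIV (D ds)))"

definition pdH :: "(real ^ 'l \<Rightarrow> real) \<Rightarrow> 'l \<Rightarrow> real ^ 'l \<Rightarrow> real" where
  "pdH H p y = deriv (\<lambda>s. H (y + s *\<^sub>R axis p 1)) 0"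

definition test_fun :: "real \<Rightarrow> real \<Rightarrow> (real \<Rightarrow> real) \<Rightarrow> bool" where
  "test_fun a b g \<longleftrightarrow> (\<forall>k z. (deriv ^^ k) g differentiable (at z)) \<and>
     (\<exists>c d. a < c \<and> d < b \<and> (\<forall>z. z \<notin> {c..d} \<longrightarrow> g z = 0))"

definition L2_on :: "real \<Rightarrow> real \<Rightarrow> (real \<Rightarrow> real ^ 'd) \<Rightarrow> bool" where
  "L2_on a b f \<longleftrightarrow> f measurable_on {a..b} \<and> (\<lambda>z. (norm (f z))\<^sup>2) integrable_on {a..b}"

text \<open>xbar = (d_z^{j_1} x_{i_1}, ..., d_z^{j_l} x_{i_l}), with I p = (i_p, j_p).\<close>
definition xbar :: "('l \<Rightarrow> 'n \<times> nat) \<Rightarrow> (real \<Rightarrow> real ^ 'n) \<Rightarrow> real \<Rightarrow> real ^ 'l" where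
  "xbar I u z = (\<chi> p. Dz (snd (I p)) (\<lambda>w. u w $ fst (I p)) z)"

definition Hfun :: "real \<Rightarrow> real \<Rightarrow> ('l \<Rightarrow> 'n \<times> nat) \<Rightarrow> (real ^ 'l \<Rightarrow> real)
    \<Rightarrow> (real \<Rightarrow> real ^ 'n) \<Rightarrow> real" where
  "Hfun a b I H u = integral {a..b} (\<lambda>z. H (xbar I u z))"

definition is_var_deriv :: "real \<Rightarrow> real \<Rightarrow> ((real \<Rightarrow> real ^ 'n) \<Rightarrow> real)
    \<Rightarrow> (real \<Rightarrow> real ^ 'n) \<Rightarrow> (real \<Rightarrow> real ^ 'n) \<Rightarrow> bool" where
  "is_var_deriv a b F u e \<longleftrightarrow> (\<forall>\<eta>::real \<Rightarrow> real ^ 'n. (\<forall>i. test_fun a b (\<lambda>z. \<eta> z $ i)) \<longrightarrow>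
     ((\<lambda>\<epsilon>. F (\<lambda>z. u z + \<epsilon> *\<^sub>R \<eta> z)) has_real_derivative integral {a..b} (\<lambda>z. e z \<bullet> \<eta> z)) (at 0))"

definition Jop :: "nat \<Rightarrow> (nat \<Rightarrow> real ^ 'n ^ 'n) \<Rightarrow> (real \<Rightarrow> real ^ 'n) \<Rightarrow> real \<Rightarrow> real ^ 'n" where
  "Jop m P f z = (\<Sum>j\<le>m. P j *v (\<chi> k. Dz j (\<lambda>w. f w $ k) z))"

definition Gop :: "nat \<Rightarrow> (nat \<Rightarrow> real ^ 'd ^ 'n) \<Rightarrow> (real \<Rightarrow> real ^ 'd) \<Rightarrow> real \<Rightarrow> real ^ 'n" where
  "Gop mg G f z = (\<Sum>k\<le>mg. G k *v (\<chi> r. Dz k (\<lambda>w. f w $ r) z))"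

definition Gadj :: "nat \<Rightarrow> (nat \<Rightarrow> real ^ 'd ^ 'n) \<Rightarrow> (real \<Rightarrow> real ^ 'n) \<Rightarrow> real \<Rightarrow> real ^ 'd" where
  "Gadj mg G g z = (\<Sum>k\<le>mg. (-1) ^ k *\<^sub>R (\<chi> r. Dz k (\<lambda>w. (transpose (G k) *v g w) $ r) z))"

definition Rmul :: "(real \<Rightarrow> real ^ 'd ^ 'd) \<Rightarrow> (real \<Rightarrow> real ^ 'd) \<Rightarrow> real \<Rightarrow> real ^ 'd" where
  "Rmul R f z = R z *v f z"

definition JJop :: "nat \<Rightarrow> (nat \<Rightarrow> real ^ 'n ^ 'n) \<Rightarrow> ('l \<Rightarrow> 'n \<times> nat)
    \<Rightarrow> (real \<Rightarrow> real ^ 'l) \<Rightarrow> real \<Rightarrow> real ^ 'l" where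
  "JJop m P I g z = (\<chi> p. Dz (snd (I p)) (\<lambda>w. \<Sum>q\<in>UNIV. \<Sum>j\<le>m.
      P j $ fst (I p) $ fst (I q) *
        Dz j (\<lambda>w'. (-1) ^ snd (I q) * Dz (snd (I q)) (\<lambda>u. g u $ q) w') w) z)"

definition GGop :: "nat \<Rightarrow> (nat \<Rightarrow> real ^ 'd ^ 'n) \<Rightarrow> ('l \<Rightarrow> 'n \<times> nat)
    \<Rightarrow> (real \<Rightarrow> real ^ 'd) \<Rightarrow> real \<Rightarrow> real ^ 'l" where
  "GGop mg G I f z = (\<chi> p. Dz (snd (I p)) (\<lambda>w. \<Sum>k\<le>mg. \<Sum>r\<in>UNIV.
      G k $ fst (I p) $ r * Dz k (\<lambda>w'. f w' $ r) w) z)"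

text \<open>formal L^2 adjoint: GG_R^* = (sum_k (-d_z)^k Ghat_k^T) diag((-d_z)^{j_1},...,(-d_z)^{j_l})\<close>
definition GGadj :: "nat \<Rightarrow> (nat \<Rightarrow> real ^ 'd ^ 'n) \<Rightarrow> ('l \<Rightarrow> 'n \<times> nat)
    \<Rightarrow> (real \<Rightarrow> real ^ 'l) \<Rightarrow> real \<Rightarrow> real ^ 'd" where
  "GGadj mg G I g z = (\<chi> r. \<Sum>k\<le>mg. (-1) ^ k * Dz k (\<lambda>w. \<Sum>p\<in>UNIV.
      G k $ fst (I p) $ r * ((-1) ^ snd (I p) * Dz (snd (I p)) (\<lambda>u. g u $ p) w)) z)"

end

theory Submission
  imports Defs "HOL-Computational_Algebra.Polynomial"
begin


lemma rd_fd: "((f::real\<Rightarrow>real) differentiable at x) \<longleftrightarrow> f field_differentiable at x"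
  by (simp add: real_differentiable_def field_differentiable_def)

definition sm :: "real set \<Rightarrow> (real \<Rightarrow> real) \<Rightarrow> bool" where
  "sm S f \<longleftrightarrow> (\<forall>k. \<forall>z\<in>S. (deriv^^k) f differentiable (at z))"

definition Ck :: "nat \<Rightarrow> real set \<Rightarrow> (real \<Rightarrow> real) \<Rightarrow> bool" where
  "Ck n S f \<longleftrightarrow> (\<forall>k<n. \<forall>z\<in>S. (deriv^^k) f differentiable (at z))"

lemma sm_Ck: "sm S f \<longleftrightarrow> (\<forall>n. Ck n S f)"
  unfolding sm_def Ck_def by (meson lessI)

lemma Ck_0[simp]: "Ck 0 S f" by (simp add: Ck_def)

lemma funpow_deriv_Suc: "(deriv^^(Suc k)) f = (deriv^^k) (deriv f)"
  by (simp only: funpow_Suc_right comp_def)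

lemma Ck_Suc: "Ck (Suc n) S f \<longleftrightarrow> (\<forall>z\<in>S. f differentiable (at z)) \<and> Ck n S (deriv f)"
  unfolding Ck_def
proof safe
  fix k z assume "\<forall>k<Suc n. \<forall>z\<in>S. (deriv ^^ k) f differentiable at z" "k < n" "z \<in> S"
  then show "(deriv ^^ k) (deriv f) differentiable at z"
    by (metis Suc_mono funpow_deriv_Suc)
next
  fix k z assume "\<forall>z\<in>S. f differentiable at z" "\<forall>k<n. \<forall>z\<in>S. (deriv ^^ k) (deriv f) differentiable at z"
    "k < Suc n" "z \<in> S"
  then show "(deriv ^^ k) f differentiable at z"
    by (cases k) (auto simp: funpow_deriv_Suc simp del: funpow.simps)
qed auto

lemma Ck_mono: "Ck (Suc n) S f \<Longrightarrow> Ck n S f" by (simp add: Ck_def)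

lemma deriv_eq_open: "open S \<Longrightarrow> (\<And>z. z\<in>S \<Longrightarrow> f z = g z) \<Longrightarrow> z\<in>S \<Longrightarrow> deriv f z = deriv g z"
  by (rule deriv_cong_ev) (auto elim!: eventually_mono[OF eventually_nhds_in_open])

lemma diff_eq_open: "open S \<Longrightarrow> (\<And>z. z\<in>S \<Longrightarrow> f z = g z) \<Longrightarrow> z\<in>S \<Longrightarrow>
   (f::real\<Rightarrow>real) differentiable at z \<Longrightarrow> g differentiable at z"
  unfolding real_differentiable_def
  using has_field_derivative_transform_within_open by blast

lemma funpow_eq_open: "open S \<Longrightarrow> (\<And>z. z\<in>S \<Longrightarrow> f z = g z) \<Longrightarrow> z\<in>S \<Longrightarrow>
   (deriv^^k) f z = (deriv^^k) g z"
proof (induction k arbitrary: f g z)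
  case 0 then show ?case by simp
next
  case (Suc k)
  have "(deriv^^k) (deriv f) z = (deriv^^k) (deriv g) z"
    by (rule Suc.IH[OF Suc.prems(1) _ Suc.prems(3)]) (rule deriv_eq_open[OF Suc.prems(1,2)])
  then show ?case by (simp only: funpow_deriv_Suc)
qed

lemma Ck_cong: "open S \<Longrightarrow> (\<And>z. z\<in>S \<Longrightarrow> f z = g z) \<Longrightarrow> Ck n S f \<Longrightarrow> Ck n S g"
  unfolding Ck_def
proof safe
  fix k z assume o: "open S" and e: "\<And>z. z\<in>S \<Longrightarrow> f z = g z"
    and h: "\<forall>k<n. \<forall>z\<in>S. (deriv ^^ k) f differentiable at z" and "k < n" "z \<in> S"
  have e2: "\<And>w. w\<in>S \<Longrightarrow> (deriv ^^ k) f w = (deriv ^^ k) g w"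
    by (rule funpow_eq_open[OF o e])
  show "(deriv ^^ k) g differentiable at z"
    by (rule diff_eq_open[OF o e2 \<open>z\<in>S\<close>]) (use h \<open>k<n\<close> \<open>z\<in>S\<close> in auto)
qed

lemma sm_cong: "open S \<Longrightarrow> (\<And>z. z\<in>S \<Longrightarrow> f z = g z) \<Longrightarrow> sm S f \<Longrightarrow> sm S g"
  unfolding sm_Ck by (metis Ck_cong)

lemma Ck_add: "open S \<Longrightarrow> Ck n S f \<Longrightarrow> Ck n S g \<Longrightarrow> Ck n S (\<lambda>z. f z + g z)"
proof (induction n arbitrary: f g)
  case 0 then show ?case by simp
next
  case (Suc n)
  have d: "\<forall>z\<in>S. f differentiable at z" "\<forall>z\<in>S. g differentiable at z"
    "Ck n S (deriv f)" "Ck n S (deriv g)" using Suc.prems Ck_Suc by auto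
  have "Ck n S (\<lambda>z. deriv f z + deriv g z)" using Suc.IH[OF Suc.prems(1) d(3,4)] .
  then have "Ck n S (deriv (\<lambda>z. f z + g z))"
    by (rule Ck_cong[OF Suc.prems(1), rotated]) (use d in \<open>auto simp: rd_fd deriv_add\<close>)
  moreover have "\<forall>z\<in>S. (\<lambda>z. f z + g z) differentiable at z" using d by auto
  ultimately show ?case by (simp add: Ck_Suc)
qed

lemma Ck_diff: "open S \<Longrightarrow> Ck n S f \<Longrightarrow> Ck n S g \<Longrightarrow> Ck n S (\<lambda>z. f z - g z)"
proof (induction n arbitrary: f g)
  case 0 then show ?case by simp
next
  case (Suc n)
  have d: "\<forall>z\<in>S. f differentiable at z" "\<forall>z\<in>S. g differentiable at z"
    "Ck n S (deriv f)" "Ck n S (deriv g)" using Suc.prems Ck_Suc by auto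
  have "Ck n S (\<lambda>z. deriv f z - deriv g z)" using Suc.IH[OF Suc.prems(1) d(3,4)] .
  then have "Ck n S (deriv (\<lambda>z. f z - g z))"
    by (rule Ck_cong[OF Suc.prems(1), rotated]) (use d in \<open>auto simp: rd_fd deriv_diff\<close>)
  moreover have "\<forall>z\<in>S. (\<lambda>z. f z - g z) differentiable at z" using d by auto
  ultimately show ?case by (simp add: Ck_Suc)
qed

lemma Ck_mult: "open S \<Longrightarrow> Ck n S f \<Longrightarrow> Ck n S g \<Longrightarrow> Ck n S (\<lambda>z. f z * g z)"
proof (induction n arbitrary: f g)
  case 0 then show ?case by simp
next
  case (Suc n)
  have d: "\<forall>z\<in>S. f differentiable at z" "\<forall>z\<in>S. g differentiable at z"
    "Ck n S (deriv f)" "Ck n S (deriv g)" "Ck n S f" "Ck n S g"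
    using Suc.prems Ck_Suc Ck_mono by auto
  have "Ck n S (\<lambda>z. f z * deriv g z + deriv f z * g z)"
    using Ck_add[OF Suc.prems(1) Suc.IH[OF Suc.prems(1) d(5,4)] Suc.IH[OF Suc.prems(1) d(3,6)]] .
  then have "Ck n S (deriv (\<lambda>z. f z * g z))"
    by (rule Ck_cong[OF Suc.prems(1), rotated]) (use d in \<open>auto simp: rd_fd deriv_mult\<close>)
  moreover have "\<forall>z\<in>S. (\<lambda>z. f z * g z) differentiable at z" using d by auto
  ultimately show ?case by (simp add: Ck_Suc)
qed

lemma Ck_const: "Ck n S (\<lambda>z. c)"
  by (induction n arbitrary: c) (auto simp: Ck_Suc)

lemma Ck_id: "Ck n S (\<lambda>z. z)"
  by (cases n) (auto simp: Ck_Suc Ck_const)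

lemma sm_add: "open S \<Longrightarrow> sm S f \<Longrightarrow> sm S g \<Longrightarrow> sm S (\<lambda>z. f z + g z)"
  by (simp add: sm_Ck Ck_add)
lemma sm_diff: "open S \<Longrightarrow> sm S f \<Longrightarrow> sm S g \<Longrightarrow> sm S (\<lambda>z. f z - g z)"
  by (simp add: sm_Ck Ck_diff)
lemma sm_mult: "open S \<Longrightarrow> sm S f \<Longrightarrow> sm S g \<Longrightarrow> sm S (\<lambda>z. f z * g z)"
  by (simp add: sm_Ck Ck_mult)
lemma sm_const: "sm S (\<lambda>z. c)"
  by (simp add: sm_Ck Ck_const)
lemma sm_id: "sm S (\<lambda>z. z)"
  by (simp add: sm_Ck Ck_id)
lemma sm_cmult: "open S \<Longrightarrow> sm S f \<Longrightarrow> sm S (\<lambda>z. c * f z)"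
  by (rule sm_mult[OF _ sm_const])
lemma sm_sum: "finite A \<Longrightarrow> open S \<Longrightarrow> (\<And>a. a\<in>A \<Longrightarrow> sm S (f a)) \<Longrightarrow> sm S (\<lambda>z. \<Sum>a\<in>A. f a z)"
  by (induction A rule: finite_induct) (auto intro!: sm_add sm_const)
lemma sm_subset: "T \<subseteq> S \<Longrightarrow> sm S f \<Longrightarrow> sm T f"
  unfolding sm_def by blast
lemma sm_diffble: "sm S f \<Longrightarrow> z \<in> S \<Longrightarrow> f differentiable at z"
  unfolding sm_def by (drule spec[of _ 0]) simp
lemma sm_deriv: "sm S f \<Longrightarrow> sm S (deriv f)"
  unfolding sm_def
proof safe
  fix k z assume "\<forall>k. \<forall>z\<in>S. (deriv ^^ k) f differentiable at z" "z \<in> S"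
  then have "(deriv ^^ Suc k) f differentiable at z" by blast
  then show "(deriv ^^ k) (deriv f) differentiable at z" by (simp only: funpow_deriv_Suc)
qed
lemma sm_funpow: "sm S f \<Longrightarrow> sm S ((deriv^^k) f)"
  by (induction k) (auto simp: sm_deriv)
lemma sm_cont: "sm S f \<Longrightarrow> continuous_on S f"
  by (intro continuous_at_imp_continuous_on ballI differentiable_imp_continuous_within sm_diffble)
lemma sm_has_deriv: "sm S f \<Longrightarrow> z \<in> S \<Longrightarrow> (f has_real_derivative deriv f z) (at z)"
  by (simp add: DERIV_deriv_iff_real_differentiable sm_diffble)

lemma fp_zero: "(deriv^^k) (\<lambda>z. 0::real) = (\<lambda>z. 0)"
  by (induction k) auto

lemma fp_add: "open S \<Longrightarrow> sm S f \<Longrightarrow> sm S g \<Longrightarrow> z\<in>S \<Longrightarrow>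
   (deriv^^k) (\<lambda>z. f z + g z) z = (deriv^^k) f z + (deriv^^k) g z"
proof (induction k arbitrary: f g z)
  case 0 then show ?case by simp
next
  case (Suc k)
  have "(deriv^^k) (deriv (\<lambda>z. f z + g z)) z = (deriv^^k) (\<lambda>z. deriv f z + deriv g z) z"
    by (rule funpow_eq_open[OF Suc.prems(1) _ Suc.prems(4)])
       (use Suc.prems in \<open>auto intro!: deriv_add simp: rd_fd[symmetric] intro: sm_diffble\<close>)
  also have "\<dots> = (deriv^^k) (deriv f) z + (deriv^^k) (deriv g) z"
    using Suc.IH[OF Suc.prems(1) sm_deriv sm_deriv Suc.prems(4)] Suc.prems by blast
  finally show ?case by (simp only: funpow_deriv_Suc)
qed

lemma fp_diff: "open S \<Longrightarrow> sm S f \<Longrightarrow> sm S g \<Longrightarrow> z\<in>S \<Longrightarrow>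
   (deriv^^k) (\<lambda>z. f z - g z) z = (deriv^^k) f z - (deriv^^k) g z"
proof (induction k arbitrary: f g z)
  case 0 then show ?case by simp
next
  case (Suc k)
  have "(deriv^^k) (deriv (\<lambda>z. f z - g z)) z = (deriv^^k) (\<lambda>z. deriv f z - deriv g z) z"
    by (rule funpow_eq_open[OF Suc.prems(1) _ Suc.prems(4)])
       (use Suc.prems in \<open>auto intro!: deriv_diff simp: rd_fd[symmetric] intro: sm_diffble\<close>)
  also have "\<dots> = (deriv^^k) (deriv f) z - (deriv^^k) (deriv g) z"
    using Suc.IH[OF Suc.prems(1) sm_deriv sm_deriv Suc.prems(4)] Suc.prems by blast
  finally show ?case by (simp only: funpow_deriv_Suc)
qed

lemma fp_cmult: "open S \<Longrightarrow> sm S f \<Longrightarrow> z\<in>S \<Longrightarrow>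
   (deriv^^k) (\<lambda>z. c * f z) z = c * (deriv^^k) f z"
proof (induction k arbitrary: f z)
  case 0 then show ?case by simp
next
  case (Suc k)
  have "(deriv^^k) (deriv (\<lambda>z. c * f z)) z = (deriv^^k) (\<lambda>z. c * deriv f z) z"
    by (rule funpow_eq_open[OF Suc.prems(1) _ Suc.prems(3)])
       (use Suc.prems in \<open>auto intro!: deriv_cmult simp: rd_fd[symmetric] intro: sm_diffble\<close>)
  also have "\<dots> = c * (deriv^^k) (deriv f) z"
    using Suc.IH[OF Suc.prems(1) sm_deriv Suc.prems(3)] Suc.prems by blast
  finally show ?case by (simp only: funpow_deriv_Suc)
qed

lemma fp_sum: "finite A \<Longrightarrow> open S \<Longrightarrow> (\<And>a. a\<in>A \<Longrightarrow> sm S (f a)) \<Longrightarrow> z\<in>S \<Longrightarrow>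
   (deriv^^k) (\<lambda>z. \<Sum>a\<in>A. f a z) z = (\<Sum>a\<in>A. (deriv^^k) (f a) z)"
proof (induction A rule: finite_induct)
  case empty then show ?case by (simp add: fp_zero)
next
  case (insert a A)
  have "(deriv^^k) (\<lambda>z. \<Sum>a\<in>insert a A. f a z) z = (deriv^^k) (\<lambda>z. f a z + (\<Sum>a\<in>A. f a z)) z"
    using insert by simp
  also have "\<dots> = (deriv^^k) (f a) z + (deriv^^k) (\<lambda>z. \<Sum>a\<in>A. f a z) z"
    by (rule fp_add) (use insert in \<open>auto intro!: sm_sum\<close>)
  finally show ?case using insert by simp
qed

lemma fp_add_idx: "(deriv^^(j+k)) f = (deriv^^j) ((deriv^^k) f)"
  by (simp add: funpow_add)

lemma sm_from_D:
  assumes "open S" "D 0 = f" "\<And>k z. z\<in>S \<Longrightarrow> (D k has_real_derivative D (Suc k) z) (at z)"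
  shows "sm S f" "\<And>k z. z\<in>S \<Longrightarrow> (deriv^^k) f z = D k z"
proof -
  have eq: "(deriv^^k) f z = D k z" if "z\<in>S" for k z
    using that
  proof (induction k arbitrary: z)
    case 0 then show ?case using assms by simp
  next
    case (Suc k)
    have "deriv ((deriv^^k) f) z = deriv (D k) z"
      by (rule deriv_eq_open[OF assms(1) Suc.IH Suc.prems])
    also have "\<dots> = D (Suc k) z" using assms(3)[OF Suc.prems] by (rule DERIV_imp_deriv)
    finally show ?case by simp
  qed
  then show "\<And>k z. z\<in>S \<Longrightarrow> (deriv^^k) f z = D k z" .
  show "sm S f" unfolding sm_def
  proof safe
    fix k z assume "z \<in> S"
    have d: "D k differentiable at z" using assms(3)[OF \<open>z\<in>S\<close>] real_differentiable_def by blast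
    have e': "\<And>w. w\<in>S \<Longrightarrow> D k w = (deriv^^k) f w" using eq by simp
    show "(deriv ^^ k) f differentiable at z"
      by (rule diff_eq_open[OF assms(1) e' \<open>z\<in>S\<close> d])
  qed
qed

lemma sm_comp:
  assumes "open S" "sm UNIV \<phi>" "sm S g"
  shows "sm S (\<lambda>z. \<phi> (g z))"
proof -
  have "Ck n S (\<lambda>z. (deriv^^k) \<phi> (g z))" for n k
  proof (induction n arbitrary: k)
    case 0 then show ?case by simp
  next
    case (Suc n)
    have dd: "((\<lambda>z. (deriv^^k) \<phi> (g z)) has_real_derivative (deriv^^(Suc k)) \<phi> (g z) * deriv g z) (at z)"
      if "z \<in> S" for z
      using DERIV_chain2[OF sm_has_deriv[OF sm_funpow[OF assms(2)]] sm_has_deriv[OF assms(3) that]]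
      by simp
    have "Ck n S (\<lambda>z. (deriv^^(Suc k)) \<phi> (g z) * deriv g z)"
      by (rule Ck_mult[OF assms(1) Suc.IH]) (use sm_deriv[OF assms(3)] in \<open>simp add: sm_Ck\<close>)
    then have "Ck n S (deriv (\<lambda>z. (deriv^^k) \<phi> (g z)))"
      by (rule Ck_cong[OF assms(1), rotated]) (use dd[THEN DERIV_imp_deriv] in simp)
    moreover have "\<forall>z\<in>S. (\<lambda>z. (deriv^^k) \<phi> (g z)) differentiable at z"
      using dd real_differentiable_def by blast
    ultimately show ?case by (simp add: Ck_Suc)
  qed
  from this[of _ 0] show ?thesis by (simp add: sm_Ck)
qed


lemma axis_shift_deriv:
  fixes F :: "real^'l \<Rightarrow> real"
  assumes pd: "\<And>y. ((\<lambda>s. F (y + s *\<^sub>R axis p 1)) has_real_derivative Dp y) (at 0)"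
  shows "((\<lambda>s. F (z + s *\<^sub>R axis p 1)) has_real_derivative Dp (z + t *\<^sub>R axis p 1)) (at t)"
proof -
  have "((\<lambda>u. F ((z + t *\<^sub>R axis p 1) + u *\<^sub>R axis p 1)) has_real_derivative Dp (z + t *\<^sub>R axis p 1)) (at 0)"
    by (rule pd)
  moreover have "(\<lambda>u. F ((z + t *\<^sub>R axis p 1) + u *\<^sub>R axis p 1)) = (\<lambda>u. F (z + (u + t) *\<^sub>R axis p 1))"
    by (simp add: scaleR_add_left algebra_simps)
  ultimately have "((\<lambda>u. (\<lambda>s. F (z + s *\<^sub>R axis p 1)) (u + t)) has_real_derivative Dp (z + t *\<^sub>R axis p 1)) (at 0)"
    by simp
  then show ?thesis using DERIV_shift[of "\<lambda>s. F (z + s *\<^sub>R axis p 1)" _ 0 t] by simp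
qed

lemma axis_mvt_bound:
  fixes F :: "real^'l \<Rightarrow> real"
  assumes pd: "\<And>y. ((\<lambda>s. F (y + s *\<^sub>R axis p 1)) has_real_derivative Dp y) (at 0)"
    and bnd: "\<And>\<theta>. \<bar>\<theta>\<bar> \<le> \<bar>t\<bar> \<Longrightarrow> \<bar>Dp (z + \<theta> *\<^sub>R axis p 1) - c\<bar> \<le> \<epsilon>"
  shows "\<bar>F (z + t *\<^sub>R axis p 1) - F z - t * c\<bar> \<le> \<epsilon> * \<bar>t\<bar>"
proof -
  define g where "g s = F (z + s *\<^sub>R axis p 1) - s * c" for s
  have gd: "(g has_real_derivative (Dp (z + s *\<^sub>R axis p 1) - c)) (at s)" for s
  proof -
    have A: "((\<lambda>s. F (z + s *\<^sub>R axis p 1)) has_real_derivative Dp (z + s *\<^sub>R axis p 1)) (at s)"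
      by (rule axis_shift_deriv[OF pd])
    have B: "((\<lambda>s. s * c) has_real_derivative c) (at s)" by (auto intro!: derivative_eq_intros)
    show ?thesis using DERIV_diff[OF A B] unfolding g_def by simp
  qed
  have g0: "g 0 = F z" by (simp add: g_def)
  consider "t = 0" | "t > 0" | "t < 0" by linarith
  then show ?thesis
  proof cases
    case 1 then show ?thesis by simp
  next
    case 2
    obtain \<xi> where "0 < \<xi>" "\<xi> < t" "g t - g 0 = (t - 0) * (Dp (z + \<xi> *\<^sub>R axis p 1) - c)"
      using MVT2[OF 2, of g "\<lambda>s. Dp (z + s *\<^sub>R axis p 1) - c"] gd by blast
    moreover have "\<bar>Dp (z + \<xi> *\<^sub>R axis p 1) - c\<bar> \<le> \<epsilon>" using bnd \<open>0 < \<xi>\<close> \<open>\<xi> < t\<close> by auto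
    ultimately have e1: "F (z + t *\<^sub>R axis p 1) - F z - t * c = t * (Dp (z + \<xi> *\<^sub>R axis p 1) - c)"
      and e2: "\<bar>Dp (z + \<xi> *\<^sub>R axis p 1) - c\<bar> \<le> \<epsilon>"
      using g0 by (auto simp: g_def algebra_simps)
    have "\<bar>t * (Dp (z + \<xi> *\<^sub>R axis p 1) - c)\<bar> = t * \<bar>Dp (z + \<xi> *\<^sub>R axis p 1) - c\<bar>"
      using 2 by (simp add: abs_mult)
    also have "\<dots> \<le> t * \<epsilon>" using e2 2 by (simp add: mult_left_mono)
    finally show ?thesis using e1 2 by (simp add: mult.commute)
  next
    case 3
    obtain \<xi> where "t < \<xi>" "\<xi> < 0" "g 0 - g t = (0 - t) * (Dp (z + \<xi> *\<^sub>R axis p 1) - c)"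
      using MVT2[OF 3, of g "\<lambda>s. Dp (z + s *\<^sub>R axis p 1) - c"] gd by blast
    moreover have "\<bar>Dp (z + \<xi> *\<^sub>R axis p 1) - c\<bar> \<le> \<epsilon>" using bnd \<open>t < \<xi>\<close> \<open>\<xi> < 0\<close> by auto
    ultimately have e1: "g 0 - g t = (- t) * (Dp (z + \<xi> *\<^sub>R axis p 1) - c)"
      and e2: "\<bar>Dp (z + \<xi> *\<^sub>R axis p 1) - c\<bar> \<le> \<epsilon>" by auto
    have "\<bar>(- t) * (Dp (z + \<xi> *\<^sub>R axis p 1) - c)\<bar> = (- t) * \<bar>Dp (z + \<xi> *\<^sub>R axis p 1) - c\<bar>"
      using 3 by (simp add: abs_mult)
    also have "\<dots> \<le> (- t) * \<epsilon>" using e2 3 by (simp add: mult_left_mono)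
    finally have "\<bar>g t - g 0\<bar> \<le> \<epsilon> * \<bar>t\<bar>" using e1 3 by (simp add: abs_minus_commute mult.commute)
    then show ?thesis using g0 by (simp add: g_def)
  qed
qed

definition piK :: "'l set \<Rightarrow> real^'l \<Rightarrow> real^'l" where
  "piK K v = (\<Sum>p\<in>K. (v $ p) *\<^sub>R axis p 1)"

lemma piK_nth: "finite K \<Longrightarrow> piK K v $ i = (if i \<in> K then v $ i else 0)"
  unfolding piK_def by (induction K rule: finite_induct) (auto simp: axis_def)

lemma piK_UNIV: "piK (UNIV::'l::finite set) v = v"
  by (simp add: vec_eq_iff piK_nth)

lemma partials_frechet:
  fixes F :: "real^'l \<Rightarrow> real" and Dp :: "'l \<Rightarrow> real^'l \<Rightarrow> real"
  assumes pd: "\<And>y p. ((\<lambda>s. F (y + s *\<^sub>R axis p 1)) has_real_derivative Dp p y) (at 0)"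
    and cont: "\<And>p. continuous_on UNIV (Dp p)"
  shows "(F has_derivative (\<lambda>h. \<Sum>p\<in>UNIV. h $ p * Dp p y)) (at y)"
  unfolding has_derivative_at_alt
proof safe
  show "bounded_linear (\<lambda>h. \<Sum>p\<in>UNIV. h $ p * Dp p y)"
    by (intro bounded_linear_sum bounded_linear_mult_const bounded_linear_vec_nth)
  fix e :: real assume "e > 0"
  define N where "N = real (card (UNIV::'l set))"
  have N: "N > 0" unfolding N_def by simp
  define \<epsilon> where "\<epsilon> = e / N"
  have "\<epsilon> > 0" using N \<open>e>0\<close> by (simp add: \<epsilon>_def)
  have "\<forall>\<^sub>F w in nhds y. \<bar>Dp p w - Dp p y\<bar> < \<epsilon>" for p
  proof -
    have "isCont (Dp p) y" using cont continuous_on_eq_continuous_at by blast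
    then have "(Dp p \<longlongrightarrow> Dp p y) (nhds y)" by (simp add: isCont_def tendsto_at_iff_tendsto_nhds) 
    from tendstoD[OF this \<open>\<epsilon>>0\<close>] show ?thesis by (simp add: dist_real_def)
  qed
  then have "\<forall>\<^sub>F w in nhds y. \<forall>p. \<bar>Dp p w - Dp p y\<bar> < \<epsilon>"
    by (rule eventually_all_finite)
  then obtain d where d: "d > 0" "\<And>w. dist w y < d \<Longrightarrow> \<forall>p. \<bar>Dp p w - Dp p y\<bar> < \<epsilon>"
    unfolding eventually_nhds_metric by blast
  show "\<exists>d>0. \<forall>y'. norm (y' - y) < d \<longrightarrow>
           norm (F y' - F y - (\<Sum>p\<in>UNIV. (y' - y) $ p * Dp p y)) \<le> e * norm (y' - y)"
  proof (intro exI[of _ d] conjI allI impI)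
    show "d > 0" by fact
    fix y' assume y': "norm (y' - y) < d"
    define v where "v = y' - y"
    have tele: "\<bar>F (y + piK K v) - F y - (\<Sum>p\<in>K. v $ p * Dp p y)\<bar> \<le> \<epsilon> * (\<Sum>p\<in>K. \<bar>v $ p\<bar>)"
      if "finite K" for K
      using that
    proof (induction K rule: finite_induct)
      case empty then show ?case by (simp add: piK_def)
    next
      case (insert p K)
      have pi: "piK (insert p K) v = piK K v + (v $ p) *\<^sub>R axis p 1"
        using insert by (simp add: piK_def add.commute)
      have b: "\<bar>Dp p ((y + piK K v) + \<theta> *\<^sub>R axis p 1) - Dp p y\<bar> \<le> \<epsilon>" if "\<bar>\<theta>\<bar> \<le> \<bar>v $ p\<bar>" for \<theta>
      proof -
        have "norm (piK K v + \<theta> *\<^sub>R axis p 1) \<le> norm v"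
        proof (rule norm_le_componentwise_cart)
          fix i
          show "norm ((piK K v + \<theta> *\<^sub>R axis p 1) $ i) \<le> norm (v $ i)"
            using insert that by (auto simp: piK_nth axis_def)
        qed
        then have "dist ((y + piK K v) + \<theta> *\<^sub>R axis p 1) y < d"
          using y' by (simp add: dist_norm v_def)
        then show ?thesis using d(2) less_imp_le by blast
      qed
      have s1: "\<bar>F ((y + piK K v) + v $ p *\<^sub>R axis p 1) - F (y + piK K v) - v $ p * Dp p y\<bar> \<le> \<epsilon> * \<bar>v $ p\<bar>"
        by (rule axis_mvt_bound[OF pd b])
      have "F (y + piK (insert p K) v) - F y - (\<Sum>p\<in>insert p K. v $ p * Dp p y) =
         (F ((y + piK K v) + v $ p *\<^sub>R axis p 1) - F (y + piK K v) - v $ p * Dp p y)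
         + (F (y + piK K v) - F y - (\<Sum>p\<in>K. v $ p * Dp p y))"
        using insert pi by (simp add: algebra_simps)
      then have "\<bar>F (y + piK (insert p K) v) - F y - (\<Sum>p\<in>insert p K. v $ p * Dp p y)\<bar> \<le>
          \<epsilon> * \<bar>v $ p\<bar> + \<epsilon> * (\<Sum>p\<in>K. \<bar>v $ p\<bar>)"
        using s1 insert.IH by linarith
      then show ?case using insert by (simp add: distrib_left)
    qed
    have "(\<Sum>p\<in>UNIV. \<bar>v $ p\<bar>) \<le> N * norm v"
      unfolding N_def using sum_bounded_above[of UNIV "\<lambda>p. \<bar>v $ p\<bar>" "norm v"] component_le_norm_cart
      by auto
    then have "\<epsilon> * (\<Sum>p\<in>UNIV. \<bar>v $ p\<bar>) \<le> \<epsilon> * (N * norm v)"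
      using \<open>\<epsilon>>0\<close> by (simp add: mult_left_mono)
    also have "\<dots> = e * norm v" using N by (simp add: \<epsilon>_def)
    finally show "norm (F y' - F y - (\<Sum>p\<in>UNIV. (y' - y) $ p * Dp p y)) \<le> e * norm (y' - y)"
      using tele[of UNIV] by (simp add: piK_UNIV v_def)
  qed
qed

lemma vec_has_derivative:
  fixes Y :: "real \<Rightarrow> real^'l"
  assumes "\<And>p. ((\<lambda>w. Y w $ p) has_real_derivative Y' p) (at w)"
  shows "(Y has_derivative (\<lambda>h. h *\<^sub>R (\<chi> p. Y' p))) (at w)"
  unfolding has_derivative_componentwise_within[of Y]
proof
  fix i :: "real^'l" assume "i \<in> Basis"
  then obtain p where i: "i = axis p 1" by (auto simp: Basis_vec_def)
  show "((\<lambda>x. Y x \<bullet> i) has_derivative (\<lambda>x. x *\<^sub>R (\<chi> p. Y' p) \<bullet> i)) (at w)"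
  proof -
    have "(\<lambda>x. x * Y' p) = (*) (Y' p)" by (rule ext) (simp add: mult.commute)
    then show ?thesis using assms[of p] unfolding i inner_axis has_field_derivative_def
      by simp
  qed
qed

lemma vec_has_vector_derivative:
  fixes Y :: "real \<Rightarrow> real^'l"
  assumes "\<And>p. ((\<lambda>w. Y w $ p) has_real_derivative Y' $ p) (at w)"
  shows "(Y has_vector_derivative Y') (at w)"
  using vec_has_derivative[of Y "\<lambda>p. Y' $ p" w] assms unfolding has_vector_derivative_def by simp

lemma curve_chain:
  fixes F :: "real^'l \<Rightarrow> real" and Y :: "real \<Rightarrow> real^'l"
  assumes "(F has_derivative (\<lambda>h. \<Sum>p\<in>UNIV. h $ p * Dp p (Y w))) (at (Y w))"
    and "\<And>p. ((\<lambda>w. Y w $ p) has_real_derivative Y' p) (at w)"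
  shows "((\<lambda>w. F (Y w)) has_real_derivative (\<Sum>p\<in>UNIV. Y' p * Dp p (Y w))) (at w)"
proof -
  have "((\<lambda>w. F (Y w)) has_derivative (\<lambda>h. \<Sum>p\<in>UNIV. (h *\<^sub>R (\<chi> p. Y' p)) $ p * Dp p (Y w))) (at w)"
    using diff_chain_at[OF vec_has_derivative[OF assms(2)] assms(1)] by (simp add: o_def)
  moreover have "(\<lambda>h. \<Sum>p\<in>UNIV. (h *\<^sub>R (\<chi> p. Y' p)) $ p * Dp p (Y w)) = (\<lambda>h. h * (\<Sum>p\<in>UNIV. Y' p * Dp p (Y w)))"
    by (simp add: sum_distrib_left mult.assoc)
  moreover have "(\<lambda>h. h * (\<Sum>p\<in>UNIV. Y' p * Dp p (Y w))) = (*) (\<Sum>p\<in>UNIV. Y' p * Dp p (Y w))"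
    by (rule ext) (simp add: mult.commute)
  ultimately show ?thesis by (simp add: has_field_derivative_def)
qed


lemma poly_exp_at_top: "((\<lambda>u. poly p u * exp (- u)) \<longlongrightarrow> (0::real)) at_top"
proof -
  have "((\<lambda>u. \<Sum>i\<le>degree p. coeff p i * (u ^ i / exp u)) \<longlongrightarrow> (\<Sum>i\<le>degree p. coeff p i * 0)) at_top"
    by (intro tendsto_sum tendsto_mult tendsto_const tendsto_power_div_exp_0)
  moreover have "(\<lambda>u. \<Sum>i\<le>degree p. coeff p i * (u ^ i / exp u)) = (\<lambda>u. poly p u * exp (- u))"
    by (rule ext) (simp add: poly_altdef sum_distrib_right exp_minus divide_inverse mult.assoc)
  ultimately show ?thesis by simp
qed

lemma poly_exp_at_right: "((\<lambda>x. poly p (1/x) * exp (- (1/x))) \<longlongrightarrow> (0::real)) (at_right 0)"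
proof -
  have "filterlim (\<lambda>x::real. 1/x) at_top (at_right 0)"
    using filterlim_inverse_at_top_right by (simp add: inverse_eq_divide)
  from filterlim_compose[OF poly_exp_at_top this] show ?thesis by (simp add: o_def)
qed

fun pp :: "nat \<Rightarrow> real poly" where
  "pp 0 = 1"
| "pp (Suc k) = [:0,0,1:] * (pp k - pderiv (pp k))"

definition Dpsi :: "nat \<Rightarrow> real \<Rightarrow> real" where
  "Dpsi k x = (if x > 0 then poly (pp k) (1/x) * exp (- (1/x)) else 0)"

lemma Dpsi_pos_deriv:
  assumes "x > 0"
  shows "((\<lambda>x. poly q (1/x) * exp (- (1/x))) has_real_derivative
     poly ([:0,0,1:] * (q - pderiv q)) (1/x) * exp (- (1/x))) (at x)"
proof -
  have d1: "((\<lambda>x. 1/x) has_real_derivative - ((1/x)^2)) (at x)"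
    using DERIV_inverse[of x UNIV] assms by (simp add: inverse_eq_divide power2_eq_square)
  have d2: "((\<lambda>x. poly q (1/x)) has_real_derivative poly (pderiv q) (1/x) * - ((1/x)^2)) (at x)"
    by (rule DERIV_chain2[OF poly_DERIV d1])
  have d3: "((\<lambda>x. exp (- (1/x))) has_real_derivative exp (- (1/x)) * - (- ((1/x)^2))) (at x)"
    by (rule DERIV_chain2[OF DERIV_exp DERIV_minus[OF d1]])
  note d4 = DERIV_mult[OF d2 d3]
  show ?thesis
  proof (rule DERIV_cong[OF d4])
    show "poly (pderiv q) (1 / x) * - ((1 / x)\<^sup>2) * exp (- (1 / x)) +
       exp (- (1 / x)) * - (- ((1 / x)\<^sup>2)) * poly q (1 / x) =
       poly ([:0, 0, 1:] * (q - pderiv q)) (1 / x) * exp (- (1 / x))"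
      by (simp add: poly_mult poly_diff algebra_simps power2_eq_square)
  qed
qed

lemma Dpsi_deriv: "(Dpsi k has_real_derivative Dpsi (Suc k) x) (at x)"
proof -
  consider "x > 0" | "x < 0" | "x = 0" by linarith
  then show ?thesis
  proof cases
    case 1
    have "((\<lambda>x. poly (pp k) (1/x) * exp (- (1/x))) has_real_derivative Dpsi (Suc k) x) (at x)"
      using Dpsi_pos_deriv[OF 1, of "pp k"] 1 by (simp add: Dpsi_def)
    then show ?thesis
      by (rule has_field_derivative_transform_within_open[of _ _ _ "{0<..}"]) (use 1 in \<open>auto simp: Dpsi_def\<close>)
  next
    case 2
    have "((\<lambda>x. 0) has_real_derivative Dpsi (Suc k) x) (at x)"
      using 2 by (simp add: Dpsi_def)
    then show ?thesis
      by (rule has_field_derivative_transform_within_open[of _ _ _ "{..<0}"]) (use 2 in \<open>auto simp: Dpsi_def\<close>)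
  next
    case 3
    have r: "((\<lambda>y. (Dpsi k y - Dpsi k 0) / (y - 0)) \<longlongrightarrow> 0) (at_right 0)"
    proof -
      have ev: "\<forall>\<^sub>F y in at_right 0. (Dpsi k y - Dpsi k 0) / (y - 0) = poly (pCons 0 (pp k)) (1/y) * exp (- (1/y))"
        using eventually_at_right_less[of "0::real"] by eventually_elim (simp add: Dpsi_def field_simps)
      show ?thesis by (rule tendsto_cong[OF ev, THEN iffD2]) (rule poly_exp_at_right)
    qed
    have l: "((\<lambda>y. (Dpsi k y - Dpsi k 0) / (y - 0)) \<longlongrightarrow> 0) (at_left 0)"
    proof (rule tendsto_eventually)
      show "\<forall>\<^sub>F y in at_left 0. (Dpsi k y - Dpsi k 0) / (y - 0) = (0::real)"
        unfolding eventually_at_filter by (rule always_eventually) (simp add: Dpsi_def)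
    qed
    have "((\<lambda>y. (Dpsi k y - Dpsi k 0) / (y - 0)) \<longlongrightarrow> 0) (at 0)"
      using filterlim_split_at[OF l r] .
    then have "(Dpsi k has_real_derivative 0) (at 0)"
      using has_field_derivative_iff[of "Dpsi k" 0 0 UNIV] by simp
    then show ?thesis using 3 by (simp add: Dpsi_def)
  qed
qed


definition psi :: "real \<Rightarrow> real" where "psi = Dpsi 0"

lemma sm_psi: "sm UNIV psi"
  using sm_from_D(1)[of UNIV Dpsi psi] Dpsi_deriv by (simp add: psi_def)

lemma psi_nonneg: "psi x \<ge> 0" by (simp add: psi_def Dpsi_def)
lemma psi_pos: "x > 0 \<Longrightarrow> psi x > 0" by (simp add: psi_def Dpsi_def)
lemma psi_zero: "x \<le> 0 \<Longrightarrow> psi x = 0" by (simp add: psi_def Dpsi_def)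

definition bump :: "real \<Rightarrow> real \<Rightarrow> real \<Rightarrow> real" where
  "bump z0 r z = psi (r^2 - (z - z0) * (z - z0))"

lemma sm_bump: "sm UNIV (bump z0 r)"
proof -
  have g: "sm UNIV (\<lambda>z. r^2 - (z - z0) * (z - z0))"
    by (rule sm_diff[OF open_UNIV sm_const sm_mult[OF open_UNIV sm_diff[OF open_UNIV sm_id sm_const] sm_diff[OF open_UNIV sm_id sm_const]]])
  show ?thesis unfolding bump_def by (rule sm_comp[OF open_UNIV sm_psi g])
qed

lemma bump_nonneg: "bump z0 r z \<ge> 0" by (simp add: bump_def psi_nonneg)
lemma bump_pos: "r > 0 \<Longrightarrow> bump z0 r z0 > 0" by (simp add: bump_def psi_pos)
lemma bump_zero: "r \<ge> 0 \<Longrightarrow> \<bar>z - z0\<bar> \<ge> r \<Longrightarrow> bump z0 r z = 0"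
proof -
  assume "r \<ge> 0" "\<bar>z - z0\<bar> \<ge> r"
  then have "r * r \<le> \<bar>z - z0\<bar> * \<bar>z - z0\<bar>" by (intro mult_mono) auto
  also have "\<bar>z - z0\<bar> * \<bar>z - z0\<bar> = (z - z0) * (z - z0)" by (rule abs_mult_self_eq)
  finally have "r^2 - (z - z0) * (z - z0) \<le> 0" by (simp add: power2_eq_square)
  then show ?thesis by (simp add: bump_def psi_zero)
qed

lemma test_fun_sm: "test_fun a b g \<Longrightarrow> sm UNIV g"
  unfolding test_fun_def sm_def by blast

lemma test_funI: "sm UNIV g \<Longrightarrow> a < c \<Longrightarrow> d < b \<Longrightarrow> (\<And>z. z \<notin> {c..d} \<Longrightarrow> g z = 0) \<Longrightarrow> test_fun a b g"
  unfolding test_fun_def sm_def by blast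

lemma test_bump: "r > 0 \<Longrightarrow> a < z0 - r \<Longrightarrow> z0 + r < b \<Longrightarrow> test_fun a b (bump z0 r)"
  by (rule test_funI[OF sm_bump, of a "z0 - r" "z0 + r"]) (auto intro!: bump_zero)

lemma fundamental_lemma:
  fixes h :: "real \<Rightarrow> real"
  assumes ab: "a < b" and hc: "continuous_on {a..b} h"
    and orth: "\<And>\<phi>. test_fun a b \<phi> \<Longrightarrow> integral {a..b} (\<lambda>z. h z * \<phi> z) = 0"
    and z0: "z0 \<in> {a<..<b}"
  shows "h z0 = 0"
proof (rule ccontr)
  assume hne: "h z0 \<noteq> 0"
  define g where "g z = h z0 * h z" for z
  have gc: "continuous_on {a..b} g" unfolding g_def by (intro continuous_intros hc)
  have g0: "g z0 > 0" using hne by (metis g_def not_real_square_gt_zero)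
  have "z0 \<in> {a..b}" using z0 by auto
  then obtain \<delta> where \<delta>: "\<delta> > 0" "\<And>z. z \<in> {a..b} \<Longrightarrow> dist z z0 < \<delta> \<Longrightarrow> dist (g z) (g z0) < g z0"
    using continuous_on_iff[THEN iffD1, OF gc, rule_format, OF \<open>z0 \<in> {a..b}\<close> g0] by metis
  define r where "r = min \<delta> (min (z0 - a) (b - z0)) / 2"
  have m: "min \<delta> (min (z0 - a) (b - z0)) > 0" "min \<delta> (min (z0 - a) (b - z0)) \<le> \<delta>"
    "min \<delta> (min (z0 - a) (b - z0)) \<le> z0 - a" "min \<delta> (min (z0 - a) (b - z0)) \<le> b - z0"
    using \<delta> z0 by auto
  have r: "r > 0" "r < \<delta>" "a < z0 - r" "z0 + r < b" using m unfolding r_def by linarith+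
  have tb: "test_fun a b (bump z0 r)" by (rule test_bump) (use r in auto)
  have "integral {a..b} (\<lambda>z. g z * bump z0 r z) = h z0 * integral {a..b} (\<lambda>z. h z * bump z0 r z)"
    unfolding g_def by (simp add: mult.assoc)
  also have "\<dots> = 0" using orth[OF tb] by simp
  finally have i0: "integral {a..b} (\<lambda>z. g z * bump z0 r z) = 0" .
  have bc: "continuous_on {a..b} (bump z0 r)"
    using sm_cont[OF sm_bump] continuous_on_subset by blast
  have fc: "continuous_on (cbox a b) (\<lambda>z. g z * bump z0 r z)"
    using gc bc by (auto intro!: continuous_intros)
  have nn: "0 \<le> g z * bump z0 r z" if "z \<in> box a b" for z
  proof (cases "\<bar>z - z0\<bar> < r")
    case True
    then have "dist (g z) (g z0) < g z0" using \<delta>(2)[of z] that r by (auto simp: dist_real_def mem_box)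
    then have "g z \<ge> 0" by (auto simp: dist_real_def)
    then show ?thesis by (simp add: bump_nonneg)
  next
    case False then show ?thesis using r by (simp add: bump_zero)
  qed
  have hi: "((\<lambda>z. g z * bump z0 r z) has_integral 0) (cbox a b)"
  proof -
    have "(\<lambda>z. g z * bump z0 r z) integrable_on cbox a b" by (rule integrable_continuous[OF fc])
    then have "((\<lambda>z. g z * bump z0 r z) has_integral integral (cbox a b) (\<lambda>z. g z * bump z0 r z)) (cbox a b)"
      by (rule integrable_integral)
    then show ?thesis using i0 by simp
  qed
  have "g z0 * bump z0 r z0 = 0"
    by (rule has_integral_0_cbox_imp_0[OF fc nn hi]) (use ab z0 in \<open>auto simp: mem_box\<close>)
  then show False using g0 bump_pos[OF r(1), of z0] by simp
qed


lemma fp_supp: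
  assumes g: "sm UNIV g" and supp: "\<And>z. z \<notin> {c..d} \<Longrightarrow> g z = 0" and z: "z \<notin> {c..d}"
  shows "(deriv^^k) g z = 0"
proof -
  consider "z < c" | "z > d" using z by force
  then show ?thesis
  proof cases
    case 1
    have "(deriv^^k) g z = (deriv^^k) (\<lambda>_. 0::real) z"
      by (rule funpow_eq_open[of "{..<c}"]) (use 1 supp in auto)
    then show ?thesis by (simp add: fp_zero)
  next
    case 2
    have "(deriv^^k) g z = (deriv^^k) (\<lambda>_. 0::real) z"
      by (rule funpow_eq_open[of "{d<..}"]) (use 2 supp in auto)
    then show ?thesis by (simp add: fp_zero)
  qed
qed

lemma sm_cont_on: "sm Z f \<Longrightarrow> S \<subseteq> Z \<Longrightarrow> continuous_on S f"
  using sm_cont continuous_on_subset by blast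

lemma ibp:
  assumes Z: "open Z" "{a..b} \<subseteq> Z" and ab: "a \<le> b" and f: "sm Z f" and g: "sm UNIV g"
    and supp: "\<And>z. z \<notin> {c..d} \<Longrightarrow> g z = 0" and ac: "a < c" and db: "d < b"
  shows "integral {a..b} (\<lambda>z. f z * (deriv^^j) g z) = (-1)^j * integral {a..b} (\<lambda>z. (deriv^^j) f z * g z)"
  using f
proof (induction j arbitrary: f)
  case 0 then show ?case by simp
next
  case (Suc j)
  define G where "G = (deriv^^j) g"
  have Gs: "sm UNIV G" unfolding G_def by (rule sm_funpow[OF g])
  have Ga: "G a = 0" unfolding G_def by (rule fp_supp[OF g supp]) (use ac in auto)
  have Gb: "G b = 0" unfolding G_def by (rule fp_supp[OF g supp]) (use db in auto)
  have fc: "continuous_on {a..b} f" by (rule sm_cont_on[OF Suc.prems Z(2)])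
  have dfc: "continuous_on {a..b} (deriv f)" by (rule sm_cont_on[OF sm_deriv[OF Suc.prems] Z(2)])
  have Gc: "continuous_on {a..b} G" by (rule sm_cont_on[OF Gs]) auto
  have dGc: "continuous_on {a..b} (deriv G)" by (rule sm_cont_on[OF sm_deriv[OF Gs]]) auto
  have df: "(f has_vector_derivative deriv f x) (at x)" if "x \<in> {a..b}" for x
    using sm_has_deriv[OF Suc.prems] that Z(2) has_real_derivative_iff_has_vector_derivative by blast
  have dG: "(G has_vector_derivative deriv G x) (at x)" if "x \<in> {a..b}" for x
    using sm_has_deriv[OF Gs] has_real_derivative_iff_has_vector_derivative by blast
  define I where "I = integral {a..b} (\<lambda>x. f x * deriv G x)"
  have int: "((\<lambda>x. f x * deriv G x) has_integral (f b * G b - f a * G a - (- I))) {a..b}"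
    using integrable_continuous_interval[of a b "\<lambda>x. f x * deriv G x"] fc dGc Ga Gb
    unfolding I_def by (auto intro!: continuous_intros integrable_integral)
  have "((\<lambda>x. deriv f x * G x) has_integral (- I)) {a..b}"
    by (rule integration_by_parts[OF bounded_bilinear_mult ab fc Gc df dG int])
  then have e1: "integral {a..b} (\<lambda>x. deriv f x * G x) = - I" by (rule integral_unique)
  have e2: "integral {a..b} (\<lambda>z. deriv f z * (deriv^^j) g z) = (-1)^j * integral {a..b} (\<lambda>z. (deriv^^j) (deriv f) z * g z)"
    by (rule Suc.IH[OF sm_deriv[OF Suc.prems]])
  have "integral {a..b} (\<lambda>z. f z * (deriv^^(Suc j)) g z) = I" by (simp add: I_def G_def)
  also have "\<dots> = - ((-1)^j * integral {a..b} (\<lambda>z. (deriv^^j) (deriv f) z * g z))"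
    using e1 e2 unfolding G_def by simp
  also have "\<dots> = (-1)^(Suc j) * integral {a..b} (\<lambda>z. (deriv^^(Suc j)) f z * g z)"
    by (simp only: funpow_deriv_Suc) simp
  finally show ?case .
qed

lemma Ck_sum: "finite A \<Longrightarrow> open S \<Longrightarrow> (\<And>a. a\<in>A \<Longrightarrow> Ck n S (f a)) \<Longrightarrow> Ck n S (\<lambda>z. \<Sum>a\<in>A. f a z)"
  by (induction A rule: finite_induct) (auto intro!: Ck_add Ck_const)

lemma sm_H:
  fixes D :: "'l::finite list \<Rightarrow> real^'l \<Rightarrow> real" and Y :: "real \<Rightarrow> real^'l"
  assumes pd: "\<forall>ds y p. ((\<lambda>s. D ds (y + s *\<^sub>R axis p 1)) has_real_derivative D (p # ds) y) (at 0)"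
    and cont: "\<forall>ds. continuous_on UNIV (D ds)" and S: "open S" and Ys: "\<And>p. sm S (\<lambda>w. Y w $ p)"
  shows "sm S (\<lambda>w. D ds (Y w))"
proof -
  have fr: "(D ds has_derivative (\<lambda>h. \<Sum>p\<in>UNIV. h $ p * D (p # ds) y)) (at y)" for ds y
    by (rule partials_frechet) (use pd cont in auto)
  have "Ck n S (\<lambda>w. D ds (Y w))" for n
  proof (induction n arbitrary: ds)
    case 0 then show ?case by simp
  next
    case (Suc n)
    have dd: "((\<lambda>w. D ds (Y w)) has_real_derivative (\<Sum>p\<in>UNIV. deriv (\<lambda>w. Y w $ p) w * D (p # ds) (Y w))) (at w)"
      if "w \<in> S" for w
      by (rule curve_chain[OF fr]) (rule sm_has_deriv[OF Ys that])
    have "Ck n S (\<lambda>w. \<Sum>p\<in>UNIV. deriv (\<lambda>w. Y w $ p) w * D (p # ds) (Y w))"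
    proof (rule Ck_sum[OF _ S])
      fix p :: 'l
      have "Ck n S (deriv (\<lambda>w. Y w $ p))" using sm_deriv[OF Ys[of p]] by (simp add: sm_Ck)
      then show "Ck n S (\<lambda>w. deriv (\<lambda>w. Y w $ p) w * D (p # ds) (Y w))"
        by (rule Ck_mult[OF S _ Suc.IH])
    qed simp
    then have "Ck n S (deriv (\<lambda>w. D ds (Y w)))"
      by (rule Ck_cong[OF S, rotated]) (use dd[THEN DERIV_imp_deriv] in simp)
    moreover have "\<forall>w\<in>S. (\<lambda>w. D ds (Y w)) differentiable at w"
      using dd real_differentiable_def by blast
    ultimately show ?case by (simp add: Ck_Suc)
  qed
  then show ?thesis by (simp add: sm_Ck)
qed


lemma int_sum_cont:
  fixes f :: "'c \<Rightarrow> real \<Rightarrow> real"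
  shows "finite A \<Longrightarrow> (\<And>p. p\<in>A \<Longrightarrow> continuous_on {a..b} (f p)) \<Longrightarrow>
   integral {a..b} (\<lambda>z. \<Sum>p\<in>A. f p z) = (\<Sum>p\<in>A. integral {a..b} (f p))"
  by (rule integral_sum) (simp_all add: integrable_continuous_interval)

lemma test_fun_supp:
  assumes "test_fun a b g"
  obtains c d where "a < c" "d < b" "\<And>z. z \<notin> {c..d} \<Longrightarrow> g z = 0"
  using assms unfolding test_fun_def by blast

lemma test_fun_funpow:
  assumes "test_fun a b g"
  obtains c d where "a < c" "d < b" "\<And>z. z \<notin> {c..d} \<Longrightarrow> (deriv^^k) g z = 0"
proof -
  obtain c d where cd: "a < c" "d < b" "\<And>z. z \<notin> {c..d} \<Longrightarrow> g z = 0"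
    using test_fun_supp[OF assms] by blast
  show ?thesis
    by (rule that[OF cd(1,2)]) (rule fp_supp[OF test_fun_sm[OF assms] cd(3)])
qed

lemma JJ_expand:
  fixes v :: "real \<Rightarrow> real^'l"
  assumes vs: "\<And>q. sm UNIV (\<lambda>z. v z $ q)"
  shows "JJop m P I v z $ p = (\<Sum>q\<in>UNIV. \<Sum>j\<le>m. P j $ fst (I p) $ fst (I q) *
     ((-1)^(snd (I q)) * (deriv^^(snd (I p) + j)) ((deriv^^(snd (I q))) (\<lambda>u. v u $ q)) z))"
proof -
  define V where "V q = (deriv^^(snd (I q))) (\<lambda>u. v u $ q)" for q
  have Vs: "sm UNIV (V q)" for q unfolding V_def by (rule sm_funpow[OF vs])
  have inner: "(\<lambda>w. \<Sum>q\<in>UNIV. \<Sum>j\<le>m. P j $ fst (I p) $ fst (I q) *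
        Dz j (\<lambda>w'. (-1) ^ snd (I q) * Dz (snd (I q)) (\<lambda>u. v u $ q) w') w)
      = (\<lambda>w. \<Sum>q\<in>UNIV. \<Sum>j\<le>m. P j $ fst (I p) $ fst (I q) * ((-1) ^ snd (I q) * (deriv^^j) (V q) w))"
  proof (rule ext)
    fix w
    have "Dz j (\<lambda>w'. (-1) ^ snd (I q) * Dz (snd (I q)) (\<lambda>u. v u $ q) w') w = (-1) ^ snd (I q) * (deriv^^j) (V q) w" for j q
      unfolding Dz_def V_def[symmetric] by (rule fp_cmult[OF open_UNIV Vs]) simp
    then show "(\<Sum>q\<in>UNIV. \<Sum>j\<le>m. P j $ fst (I p) $ fst (I q) *
        Dz j (\<lambda>w'. (-1) ^ snd (I q) * Dz (snd (I q)) (\<lambda>u. v u $ q) w') w)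
      = (\<Sum>q\<in>UNIV. \<Sum>j\<le>m. P j $ fst (I p) $ fst (I q) * ((-1) ^ snd (I q) * (deriv^^j) (V q) w))"
      by simp
  qed
  have "JJop m P I v z $ p = (deriv^^(snd (I p))) (\<lambda>w. \<Sum>q\<in>UNIV. \<Sum>j\<le>m. P j $ fst (I p) $ fst (I q) * ((-1) ^ snd (I q) * (deriv^^j) (V q) w)) z"
    unfolding JJop_def vec_lambda_beta inner by (simp add: Dz_def)
  also have "\<dots> = (\<Sum>q\<in>UNIV. (deriv^^(snd (I p))) (\<lambda>w. \<Sum>j\<le>m. P j $ fst (I p) $ fst (I q) * ((-1) ^ snd (I q) * (deriv^^j) (V q) w)) z)"
    by (rule fp_sum[OF _ open_UNIV]) (auto intro!: sm_sum sm_cmult sm_funpow Vs)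
  also have "\<dots> = (\<Sum>q\<in>UNIV. \<Sum>j\<le>m. (deriv^^(snd (I p))) (\<lambda>w. P j $ fst (I p) $ fst (I q) * ((-1) ^ snd (I q) * (deriv^^j) (V q) w)) z)"
    by (intro sum.cong refl fp_sum[OF _ open_UNIV]) (auto intro!: sm_sum sm_cmult sm_funpow Vs)
  also have "\<dots> = (\<Sum>q\<in>UNIV. \<Sum>j\<le>m. P j $ fst (I p) $ fst (I q) * ((-1) ^ snd (I q) * (deriv^^(snd (I p))) ((deriv^^j) (V q)) z))"
  proof (intro sum.cong refl)
    fix q j
    have "(deriv^^(snd (I p))) (\<lambda>w. P j $ fst (I p) $ fst (I q) * ((-1) ^ snd (I q) * (deriv^^j) (V q) w)) z
        = P j $ fst (I p) $ fst (I q) * (deriv^^(snd (I p))) (\<lambda>w. (-1) ^ snd (I q) * (deriv^^j) (V q) w) z"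
      by (rule fp_cmult[OF open_UNIV]) (auto intro!: sm_cmult sm_funpow Vs)
    also have "(deriv^^(snd (I p))) (\<lambda>w. (-1) ^ snd (I q) * (deriv^^j) (V q) w) z = (-1) ^ snd (I q) * (deriv^^(snd (I p))) ((deriv^^j) (V q)) z"
      by (rule fp_cmult[OF open_UNIV]) (auto intro!: sm_funpow Vs)
    finally show "(deriv^^(snd (I p))) (\<lambda>w. P j $ fst (I p) $ fst (I q) * ((-1) ^ snd (I q) * (deriv^^j) (V q) w)) z
        = P j $ fst (I p) $ fst (I q) * ((-1) ^ snd (I q) * (deriv^^(snd (I p))) ((deriv^^j) (V q)) z)" .
  qed
  finally show ?thesis by (simp add: V_def fp_add_idx)
qed

lemma skew:
  fixes u v :: "real \<Rightarrow> real^'l" and I :: "'l \<Rightarrow> 'n::finite \<times> nat" and P :: "nat \<Rightarrow> real^'n^'n"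
  assumes P_sym: "\<forall>j\<le>m. P j = (-1) ^ (j + 1) *\<^sub>R transpose (P j)"
    and ut: "\<forall>p. test_fun a b (\<lambda>z. u z $ p)" and vt: "\<forall>p. test_fun a b (\<lambda>z. v z $ p)" and ab: "a \<le> b"
  shows "integral {a..b} (\<lambda>z. u z \<bullet> JJop m P I v z) = - integral {a..b} (\<lambda>z. JJop m P I u z \<bullet> v z)"
proof -
  define U where "U p = (\<lambda>z. u z $ p)" for p
  define W where "W q = (\<lambda>z. v z $ q)" for q
  define c where "c p q j = P j $ fst (I p) $ fst (I q)" for p q j
  have us: "sm UNIV (U p)" for p unfolding U_def using ut test_fun_sm by blast
  have vs: "sm UNIV (W q)" for q unfolding W_def using vt test_fun_sm by blast
  have csym: "c q p j = (-1)^(j+1) * c p q j" if "j \<le> m" for p q j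
  proof -
    have "P j $ fst (I q) $ fst (I p) = ((-1) ^ (j + 1) *\<^sub>R transpose (P j)) $ fst (I q) $ fst (I p)"
      using P_sym that by metis
    then show ?thesis by (simp add: c_def transpose_def)
  qed
  define Lt where "Lt p q j z = c p q j * (-1)^(snd (I q)) * (U p z * (deriv^^(snd (I p) + j)) ((deriv^^(snd (I q))) (W q)) z)" for p q j z
  define Rt where "Rt q p j z = c q p j * (-1)^(snd (I p)) * ((deriv^^(snd (I q) + j)) ((deriv^^(snd (I p))) (U p)) z * W q z)" for q p j z
  have Lcont: "continuous_on {a..b} (Lt p q j)" for p q j
    unfolding Lt_def by (intro continuous_intros sm_cont_on[OF us] sm_cont_on[OF sm_funpow[OF sm_funpow[OF vs]]]) auto
  have Rcont: "continuous_on {a..b} (Rt q p j)" for p q j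
    unfolding Rt_def by (intro continuous_intros sm_cont_on[OF vs] sm_cont_on[OF sm_funpow[OF sm_funpow[OF us]]]) auto
  have Leq: "u z \<bullet> JJop m P I v z = (\<Sum>p\<in>UNIV. \<Sum>q\<in>UNIV. \<Sum>j\<le>m. Lt p q j z)" for z
  proof -
    have "u z \<bullet> JJop m P I v z = (\<Sum>p\<in>UNIV. U p z * JJop m P I v z $ p)"
      by (simp add: inner_vec_def U_def)
    also have "\<dots> = (\<Sum>p\<in>UNIV. \<Sum>q\<in>UNIV. \<Sum>j\<le>m. Lt p q j z)"
      unfolding JJ_expand[OF vs[unfolded W_def]] Lt_def c_def W_def
      by (simp add: sum_distrib_left mult_ac)
    finally show ?thesis .
  qed
  have Req: "JJop m P I u z \<bullet> v z = (\<Sum>q\<in>UNIV. \<Sum>p\<in>UNIV. \<Sum>j\<le>m. Rt q p j z)" for z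
  proof -
    have "JJop m P I u z \<bullet> v z = (\<Sum>q\<in>UNIV. JJop m P I u z $ q * W q z)"
      by (simp add: inner_vec_def W_def)
    also have "\<dots> = (\<Sum>q\<in>UNIV. \<Sum>p\<in>UNIV. \<Sum>j\<le>m. Rt q p j z)"
      unfolding JJ_expand[OF us[unfolded U_def]] Rt_def c_def U_def
      by (simp add: sum_distrib_left sum_distrib_right mult_ac)
    finally show ?thesis .
  qed
  have intL: "integral {a..b} (\<lambda>z. u z \<bullet> JJop m P I v z) = (\<Sum>p\<in>UNIV. \<Sum>q\<in>UNIV. \<Sum>j\<le>m. integral {a..b} (Lt p q j))"
    unfolding Leq
    by (subst int_sum_cont, simp, intro continuous_intros Lcont,
        intro sum.cong refl, subst int_sum_cont, simp, intro continuous_intros Lcont,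
        intro sum.cong refl, subst int_sum_cont, simp, intro continuous_intros Lcont, rule refl)
  have intR: "integral {a..b} (\<lambda>z. JJop m P I u z \<bullet> v z) = (\<Sum>q\<in>UNIV. \<Sum>p\<in>UNIV. \<Sum>j\<le>m. integral {a..b} (Rt q p j))"
    unfolding Req
    by (subst int_sum_cont, simp, intro continuous_intros Rcont,
        intro sum.cong refl, subst int_sum_cont, simp, intro continuous_intros Rcont,
        intro sum.cong refl, subst int_sum_cont, simp, intro continuous_intros Rcont, rule refl)
  have tmq: "integral {a..b} (Lt p q j) = - integral {a..b} (Rt q p j)" if "j \<le> m" for p q j
  proof -
    define K where "K = integral {a..b} (\<lambda>z. (deriv^^(snd (I p) + j)) (U p) z * (deriv^^(snd (I q))) (W q) z)"
    obtain c1 d1 where cd1: "a < c1" "d1 < b" "\<And>z. z \<notin> {c1..d1} \<Longrightarrow> (deriv^^(snd (I q))) (W q) z = 0"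
      using test_fun_funpow[of a b "W q" "snd (I q)"] vt unfolding W_def by blast
    obtain c2 d2 where cd2: "a < c2" "d2 < b" "\<And>z. z \<notin> {c2..d2} \<Longrightarrow> (deriv^^(j + snd (I p))) (U p) z = 0"
      using test_fun_funpow[of a b "U p" "j + snd (I p)"] ut unfolding U_def by blast
    have "integral {a..b} (Lt p q j) = c p q j * (-1)^(snd (I q)) *
        integral {a..b} (\<lambda>z. U p z * (deriv^^(snd (I p) + j)) ((deriv^^(snd (I q))) (W q)) z)"
      unfolding Lt_def by (rule integral_mult_right)
    also have "integral {a..b} (\<lambda>z. U p z * (deriv^^(snd (I p) + j)) ((deriv^^(snd (I q))) (W q)) z) = (-1)^(snd (I p) + j) * K"
      unfolding K_def
      by (rule ibp[OF open_UNIV _ ab us sm_funpow[OF vs] cd1(3) cd1(1,2)]) simp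
    finally have L: "integral {a..b} (Lt p q j) = c p q j * (-1)^(snd (I q)) * ((-1)^(snd (I p) + j) * K)" .
    have "integral {a..b} (Rt q p j) = c q p j * (-1)^(snd (I p)) *
        integral {a..b} (\<lambda>z. (deriv^^(snd (I q) + j)) ((deriv^^(snd (I p))) (U p)) z * W q z)"
      unfolding Rt_def by (rule integral_mult_right)
    also have "integral {a..b} (\<lambda>z. (deriv^^(snd (I q) + j)) ((deriv^^(snd (I p))) (U p)) z * W q z)
        = integral {a..b} (\<lambda>z. W q z * (deriv^^(snd (I q))) ((deriv^^(j + snd (I p))) (U p)) z)"
    proof -
      have e: "(deriv^^(snd (I q) + j)) ((deriv^^(snd (I p))) (U p)) z * W q z = W q z * (deriv^^(snd (I q))) ((deriv^^(j + snd (I p))) (U p)) z" for z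
        by (simp only: fp_add_idx) (rule mult.commute)
      show ?thesis unfolding e ..
    qed
    also have "\<dots> = (-1)^(snd (I q)) * integral {a..b} (\<lambda>z. (deriv^^(snd (I q))) (W q) z * (deriv^^(j + snd (I p))) (U p) z)"
      by (rule ibp[OF open_UNIV _ ab vs sm_funpow[OF us] cd2(3) cd2(1,2)]) simp
    also have "integral {a..b} (\<lambda>z. (deriv^^(snd (I q))) (W q) z * (deriv^^(j + snd (I p))) (U p) z) = K"
    proof -
      have e: "(deriv^^(snd (I q))) (W q) z * (deriv^^(j + snd (I p))) (U p) z = (deriv^^(snd (I p) + j)) (U p) z * (deriv^^(snd (I q))) (W q) z" for z
        by (subst add.commute) (rule mult.commute)
      show ?thesis unfolding K_def e ..
    qed
    finally have R: "integral {a..b} (Rt q p j) = c q p j * (-1)^(snd (I p)) * ((-1)^(snd (I q)) * K)" .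
    show ?thesis unfolding L R csym[where p=p and q=q and j=j, OF that] by (simp add: power_add)
  qed
  have "integral {a..b} (\<lambda>z. u z \<bullet> JJop m P I v z) = (\<Sum>p\<in>UNIV. \<Sum>q\<in>UNIV. \<Sum>j\<le>m. - integral {a..b} (Rt q p j))"
    unfolding intL by (intro sum.cong refl tmq) simp
  also have "\<dots> = - (\<Sum>p\<in>UNIV. \<Sum>q\<in>UNIV. \<Sum>j\<le>m. integral {a..b} (Rt q p j))"
    by (simp add: sum_negf)
  also have "(\<Sum>p\<in>UNIV. \<Sum>q\<in>UNIV. \<Sum>j\<le>m. integral {a..b} (Rt q p j)) = (\<Sum>q\<in>UNIV. \<Sum>p\<in>UNIV. \<Sum>j\<le>m. integral {a..b} (Rt q p j))"
    by (rule sum.swap)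
  finally show ?thesis unfolding intR .
qed


lemma hd_to_fd: "(f has_derivative (\<lambda>h. h * c)) F \<Longrightarrow> (f has_real_derivative c) F"
proof -
  assume "(f has_derivative (\<lambda>h. h * c)) F"
  moreover have "(\<lambda>h. h * c) = (*) c" by (rule ext) (simp add: mult.commute)
  ultimately show ?thesis by (simp add: has_field_derivative_def)
qed

lemma vec_comp_deriv:
  fixes f :: "real \<Rightarrow> real^'n"
  assumes "(f has_vector_derivative V) (at t)"
  shows "((\<lambda>s. f s $ i) has_real_derivative V $ i) (at t)"
proof -
  have "((\<lambda>s. f s $ i) has_derivative (\<lambda>h. (h *\<^sub>R V) $ i)) (at t)"
    using bounded_linear.has_derivative[OF bounded_linear_vec_nth assms[unfolded has_vector_derivative_def]] .
  then show ?thesis by (intro hd_to_fd) simp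
qed

lemma vec_cont:
  fixes Y :: "real \<Rightarrow> real^'l"
  assumes "\<And>p. continuous_on S (\<lambda>z. Y z $ p)"
  shows "continuous_on S Y"
proof -
  have "continuous_on S (\<lambda>z. \<chi> p. Y z $ p)" by (intro continuous_on_vec_lambda assms)
  then show ?thesis by simp
qed

lemma cinf2_parts:
  assumes D: "\<forall>p q. \<forall>y\<in>U. ((\<lambda>w. D p q (fst w) (snd w)) has_derivative
        (\<lambda>h. fst h * D (Suc p) q (fst y) (snd y) + snd h * D p (Suc q) (fst y) (snd y))) (at y)"
    and sw: "(s, w) \<in> U"
  shows "((\<lambda>w. D p q s w) has_real_derivative D p (Suc q) s w) (at w)"
    and "((\<lambda>s. D p q s w) has_real_derivative D (Suc p) q s w) (at s)"
proof -
  have h: "((\<lambda>y. D p q (fst y) (snd y)) has_derivative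
        (\<lambda>h. fst h * D (Suc p) q s w + snd h * D p (Suc q) s w)) (at (s, w))"
    using D sw by fastforce
  have p1: "((\<lambda>w. (s, w)) has_derivative (\<lambda>h. (0, h))) (at w)"
    by (auto intro!: derivative_eq_intros)
  have p2: "((\<lambda>s. (s, w)) has_derivative (\<lambda>h. (h, 0))) (at s)"
    by (auto intro!: derivative_eq_intros)
  have "((\<lambda>w. D p q s w) has_derivative (\<lambda>h. h * D p (Suc q) s w)) (at w)"
    using diff_chain_at[OF p1 h] by (simp add: o_def)
  then show "((\<lambda>w. D p q s w) has_real_derivative D p (Suc q) s w) (at w)" by (rule hd_to_fd)
  have "((\<lambda>s. D p q s w) has_derivative (\<lambda>h. h * D (Suc p) q s w)) (at s)"
    using diff_chain_at[OF p2 h] by (simp add: o_def)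
  then show "((\<lambda>s. D p q s w) has_real_derivative D (Suc p) q s w) (at s)" by (rule hd_to_fd)
qed


lemma E_ident:
  fixes X e :: "real \<Rightarrow> real^'n::finite" and I :: "'l::finite \<Rightarrow> 'n \<times> nat" and H :: "real^'l \<Rightarrow> real"
    and D :: "'l list \<Rightarrow> real^'l \<Rightarrow> real"
  assumes ab: "a < b" and Z: "open Z" "{a..b} \<subseteq> Z"
    and DH: "D [] = H"
    and pd: "\<forall>ds y p. ((\<lambda>s. D ds (y + s *\<^sub>R axis p 1)) has_real_derivative D (p # ds) y) (at 0)"
    and Dc: "\<forall>ds. continuous_on UNIV (D ds)"
    and Xs: "\<And>i. sm Z (\<lambda>w. X w $ i)"
    and ev: "is_var_deriv a b (Hfun a b I H) X e"
    and ec: "continuous_on {a..b} e"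
    and w: "w \<in> {a<..<b}"
  shows "e w $ i0 = (\<Sum>q\<in>UNIV. (if fst (I q) = i0 then 1 else 0) *
            ((-1)^(snd (I q)) * (deriv^^(snd (I q))) (\<lambda>u. D [q] (xbar I X u)) w))"
proof -
  define Y where "Y = xbar I X"
  define dl where "dl q = (if fst (I q) = i0 then 1 else (0::real))" for q
  define eb where "eb q = (\<lambda>u. D [q] (Y u))" for q
  define Ei where "Ei w = (\<Sum>q\<in>UNIV. dl q * ((-1)^(snd (I q)) * (deriv^^(snd (I q))) (eb q) w))" for w
  have Yc: "(\<lambda>u. Y u $ p) = (deriv^^(snd (I p))) (\<lambda>w. X w $ fst (I p))" for p
    by (rule ext) (simp add: Y_def xbar_def Dz_def)
  have Ys: "sm Z (\<lambda>u. Y u $ p)" for p unfolding Yc by (rule sm_funpow[OF Xs])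
  have ebs: "sm Z (eb q)" for q unfolding eb_def by (rule sm_H[OF pd Dc Z(1) Ys])
  have Eis: "sm Z Ei" unfolding Ei_def
    by (intro sm_sum[OF _ Z(1)] sm_cmult[OF Z(1)] sm_funpow ebs) simp
  have Ycont: "continuous_on {a..b} Y"
    by (rule vec_cont) (rule sm_cont_on[OF Ys Z(2)])
  have hc: "continuous_on {a..b} (\<lambda>z. e z $ i0 - Ei z)"
    by (intro continuous_intros ec sm_cont_on[OF Eis Z(2)])
  have "e w $ i0 - Ei w = 0"
  proof (rule fundamental_lemma[OF ab hc _ w])
    fix \<phi> assume t\<phi>: "test_fun a b \<phi>"
    have \<phi>s: "sm UNIV \<phi>" by (rule test_fun_sm[OF t\<phi>])
    obtain c d where cd: "a < c" "d < b" "\<And>z. z \<notin> {c..d} \<Longrightarrow> \<phi> z = 0"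
      using test_fun_supp[OF t\<phi>] by blast
    define \<eta> where "\<eta> z = \<phi> z *\<^sub>R axis i0 (1::real)" for z
    have \<eta>c: "\<eta> z $ k = (if k = i0 then 1 else 0) * \<phi> z" for z k
      by (simp add: \<eta>_def axis_def)
    have \<eta>t: "\<forall>k. test_fun a b (\<lambda>z. \<eta> z $ k)"
    proof
      fix k
      show "test_fun a b (\<lambda>z. \<eta> z $ k)"
        unfolding \<eta>c by (rule test_funI[OF sm_cmult[OF open_UNIV \<phi>s] cd(1,2)]) (simp add: cd(3))
    qed
    have der1: "((\<lambda>\<epsilon>. Hfun a b I H (\<lambda>z. X z + \<epsilon> *\<^sub>R \<eta> z)) has_real_derivative
        integral {a..b} (\<lambda>z. e z \<bullet> \<eta> z)) (at 0)"
      using ev \<eta>t unfolding is_var_deriv_def by blast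
    define B where "B z = (\<chi> p. dl p * (deriv^^(snd (I p))) \<phi> z)" for z
    have B1: "Hfun a b I H (\<lambda>z. X z + \<epsilon> *\<^sub>R \<eta> z) = integral {a..b} (\<lambda>z. H (Y z + \<epsilon> *\<^sub>R B z))" for \<epsilon>
      unfolding Hfun_def
    proof (rule integral_cong)
      fix z assume z: "z \<in> {a..b}"
      then have zZ: "z \<in> Z" using Z(2) by blast
      have "xbar I (\<lambda>z. X z + \<epsilon> *\<^sub>R \<eta> z) z = Y z + \<epsilon> *\<^sub>R B z"
      proof (subst vec_eq_iff, intro allI)
        fix p
        have "xbar I (\<lambda>z. X z + \<epsilon> *\<^sub>R \<eta> z) z $ p =
            (deriv^^(snd (I p))) (\<lambda>w. X w $ fst (I p) + \<epsilon> * (dl p * \<phi> w)) z"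
          by (simp add: xbar_def Dz_def \<eta>c dl_def)
        also have "\<dots> = (deriv^^(snd (I p))) (\<lambda>w. X w $ fst (I p)) z + (deriv^^(snd (I p))) (\<lambda>w. \<epsilon> * (dl p * \<phi> w)) z"
          by (rule fp_add[OF Z(1) Xs _ zZ]) (intro sm_cmult[OF Z(1)] sm_subset[OF _ \<phi>s], simp)
        also have "(deriv^^(snd (I p))) (\<lambda>w. \<epsilon> * (dl p * \<phi> w)) z = \<epsilon> * (deriv^^(snd (I p))) (\<lambda>w. dl p * \<phi> w) z"
          by (rule fp_cmult[OF open_UNIV _ UNIV_I]) (rule sm_cmult[OF open_UNIV \<phi>s])
        also have "(deriv^^(snd (I p))) (\<lambda>w. dl p * \<phi> w) z = dl p * (deriv^^(snd (I p))) \<phi> z"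
          by (rule fp_cmult[OF open_UNIV \<phi>s UNIV_I])
        finally show "xbar I (\<lambda>z. X z + \<epsilon> *\<^sub>R \<eta> z) z $ p = (Y z + \<epsilon> *\<^sub>R B z) $ p"
          by (simp add: B_def Y_def xbar_def Dz_def)
      qed
      then show "H (xbar I (\<lambda>z. X z + \<epsilon> *\<^sub>R \<eta> z) z) = H (Y z + \<epsilon> *\<^sub>R B z)" by simp
    qed
    have Bc: "continuous_on {a..b} B"
      unfolding B_def by (intro continuous_on_vec_lambda continuous_intros sm_cont_on[OF sm_funpow[OF \<phi>s]]) auto
    define fx where "fx \<epsilon> z = (\<Sum>p\<in>UNIV. B z $ p * D [p] (Y z + \<epsilon> *\<^sub>R B z))" for \<epsilon> z
    have fr: "(D [] has_derivative (\<lambda>h. \<Sum>p\<in>UNIV. h $ p * D [p] y)) (at y)" for y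
      by (rule partials_frechet) (use pd Dc in auto)
    have fxd: "((\<lambda>\<epsilon>. H (Y z + \<epsilon> *\<^sub>R B z)) has_field_derivative fx \<epsilon> z) (at \<epsilon> within UNIV)" for \<epsilon> z
    proof -
      have "((\<lambda>\<epsilon>. D [] (Y z + \<epsilon> *\<^sub>R B z)) has_real_derivative (\<Sum>p\<in>UNIV. B z $ p * D [p] (Y z + \<epsilon> *\<^sub>R B z))) (at \<epsilon>)"
      proof (rule curve_chain[OF fr])
        fix p
        show "((\<lambda>\<epsilon>. (Y z + \<epsilon> *\<^sub>R B z) $ p) has_real_derivative B z $ p) (at \<epsilon>)"
          by (auto intro!: derivative_eq_intros)
      qed
      then show ?thesis using DH by (simp add: fx_def)
    qed
    have Hcont: "continuous_on UNIV H" using Dc DH by metis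
    have intf: "(\<lambda>z. H (Y z + \<epsilon> *\<^sub>R B z)) integrable_on cbox a b" for \<epsilon>
    proof -
      have "continuous_on {a..b} (\<lambda>z. H (Y z + \<epsilon> *\<^sub>R B z))"
        by (rule continuous_on_compose2[OF Hcont]) (auto intro!: continuous_intros Ycont Bc)
      then show ?thesis by (simp add: integrable_continuous_interval interval_cbox[symmetric])
    qed
    define \<Phi> where "\<Phi> y = Y (snd y) + fst y *\<^sub>R B (snd y)" for y :: "real \<times> real"
    have Phic: "continuous_on (UNIV \<times> {a..b}) \<Phi>"
    proof -
      have c1: "continuous_on (UNIV \<times> {a..b}) (\<lambda>y::real\<times>real. Y (snd y))"
        by (rule continuous_on_compose2[OF Ycont continuous_on_snd]) auto
      have c2: "continuous_on (UNIV \<times> {a..b}) (\<lambda>y::real\<times>real. B (snd y))"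
        by (rule continuous_on_compose2[OF Bc continuous_on_snd]) auto
      show ?thesis unfolding \<Phi>_def by (intro continuous_intros c1 c2)
    qed
    have fxc: "continuous_on (UNIV \<times> cbox a b) (\<lambda>(x, t). fx x t)"
    proof -
      have c2: "continuous_on (UNIV \<times> {a..b}) (\<lambda>y::real\<times>real. B (snd y) $ p)" for p
        by (intro continuous_on_component continuous_on_compose2[OF Bc continuous_on_snd]) auto
      have c3: "continuous_on (UNIV \<times> {a..b}) (\<lambda>y::real\<times>real. D [p] (\<Phi> y))" for p
        by (rule continuous_on_compose2[OF Dc[rule_format] Phic]) auto
      have "continuous_on (UNIV \<times> {a..b}) (\<lambda>y. fx (fst y) (snd y))"
        unfolding fx_def \<Phi>_def[symmetric] by (intro continuous_on_sum continuous_on_mult c2 c3)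
      then show ?thesis by (simp add: case_prod_beta' interval_cbox[symmetric])
    qed
    have der2: "((\<lambda>\<epsilon>. integral (cbox a b) (\<lambda>z. H (Y z + \<epsilon> *\<^sub>R B z))) has_field_derivative
        integral (cbox a b) (fx 0)) (at 0 within UNIV)"
      by (rule leibniz_rule_field_derivative[OF fxd intf fxc]) auto
    have der2': "((\<lambda>\<epsilon>. Hfun a b I H (\<lambda>z. X z + \<epsilon> *\<^sub>R \<eta> z)) has_real_derivative
        integral {a..b} (fx 0)) (at 0)"
      using der2 unfolding B1 by (simp add: interval_cbox[symmetric])
    have eq1: "integral {a..b} (\<lambda>z. e z \<bullet> \<eta> z) = integral {a..b} (fx 0)"
      by (rule DERIV_unique[OF der1 der2'])
    have lhs: "integral {a..b} (\<lambda>z. e z \<bullet> \<eta> z) = integral {a..b} (\<lambda>z. e z $ i0 * \<phi> z)"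
      by (simp add: \<eta>_def inner_axis mult.commute)
    have ibpq: "integral {a..b} (\<lambda>z. eb q z * (deriv^^(snd (I q))) \<phi> z) =
        (-1)^(snd (I q)) * integral {a..b} (\<lambda>z. (deriv^^(snd (I q))) (eb q) z * \<phi> z)" for q
      by (rule ibp[OF Z _ ebs \<phi>s cd(3) cd(1,2)]) (use ab in simp)
    have "integral {a..b} (fx 0) = integral {a..b} (\<lambda>z. \<Sum>p\<in>UNIV. dl p * (eb p z * (deriv^^(snd (I p))) \<phi> z))"
    proof -
      have "fx 0 = (\<lambda>z. \<Sum>p\<in>UNIV. dl p * (eb p z * (deriv^^(snd (I p))) \<phi> z))"
        by (rule ext) (simp add: fx_def B_def eb_def mult_ac)
      then show ?thesis by simp
    qed
    also have "\<dots> = (\<Sum>p\<in>UNIV. integral {a..b} (\<lambda>z. dl p * (eb p z * (deriv^^(snd (I p))) \<phi> z)))"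
      by (rule int_sum_cont) (auto intro!: continuous_intros sm_cont_on[OF ebs Z(2)] sm_cont_on[OF sm_funpow[OF \<phi>s]])
    also have "\<dots> = (\<Sum>p\<in>UNIV. dl p * ((-1)^(snd (I p)) * integral {a..b} (\<lambda>z. (deriv^^(snd (I p))) (eb p) z * \<phi> z)))"
      by (simp add: ibpq)
    also have "\<dots> = (\<Sum>p\<in>UNIV. integral {a..b} (\<lambda>z. (dl p * (-1)^(snd (I p))) * ((deriv^^(snd (I p))) (eb p) z * \<phi> z)))"
      by (simp add: mult.assoc)
    also have "\<dots> = integral {a..b} (\<lambda>z. \<Sum>p\<in>UNIV. (dl p * (-1)^(snd (I p))) * ((deriv^^(snd (I p))) (eb p) z * \<phi> z))"
      by (rule int_sum_cont[symmetric]) (auto intro!: continuous_intros sm_cont_on[OF sm_funpow[OF ebs] Z(2)] sm_cont_on[OF \<phi>s])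
    also have "\<dots> = integral {a..b} (\<lambda>z. Ei z * \<phi> z)"
      by (simp add: Ei_def sum_distrib_left sum_distrib_right mult_ac)
    finally have eq2: "integral {a..b} (\<lambda>z. e z $ i0 * \<phi> z) = integral {a..b} (\<lambda>z. Ei z * \<phi> z)"
      using eq1 lhs by simp
    have i1: "(\<lambda>z. e z $ i0 * \<phi> z) integrable_on {a..b}"
      by (intro integrable_continuous_interval continuous_intros ec sm_cont_on[OF \<phi>s]) auto
    have i2: "(\<lambda>z. Ei z * \<phi> z) integrable_on {a..b}"
      by (intro integrable_continuous_interval continuous_intros sm_cont_on[OF Eis Z(2)] sm_cont_on[OF \<phi>s]) auto
    have "integral {a..b} (\<lambda>z. (e z $ i0 - Ei z) * \<phi> z) = integral {a..b} (\<lambda>z. e z $ i0 * \<phi> z) - integral {a..b} (\<lambda>z. Ei z * \<phi> z)"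
      unfolding left_diff_distrib by (rule integral_diff[OF i1 i2])
    then show "integral {a..b} (\<lambda>z. (e z $ i0 - Ei z) * \<phi> z) = 0" using eq2 by simp
  qed
  then show ?thesis by (simp add: Ei_def dl_def eb_def Y_def)
qed


lemma regroup:
  fixes c :: "'k::finite \<Rightarrow> real" and f :: "'q::finite \<Rightarrow> 'k"
  shows "(\<Sum>k\<in>UNIV. c k * (\<Sum>q\<in>UNIV. (if f q = k then 1 else 0) * X q)) = (\<Sum>q\<in>UNIV. c (f q) * X q)"
proof -
  have "(\<Sum>k\<in>UNIV. c k * (\<Sum>q\<in>UNIV. (if f q = k then 1 else 0) * X q)) =
        (\<Sum>k\<in>UNIV. \<Sum>q\<in>UNIV. (if f q = k then c k * X q else 0))"
    unfolding sum_distrib_left by (intro sum.cong refl) simp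
  also have "\<dots> = (\<Sum>q\<in>UNIV. \<Sum>k\<in>UNIV. (if f q = k then c k * X q else 0))"
    by (rule sum.swap)
  also have "\<dots> = (\<Sum>q\<in>UNIV. c (f q) * X q)"
    by (simp add: sum.delta)
  finally show ?thesis .
qed

lemma J1:
  fixes e ebar :: "real \<Rightarrow> real^_" and I :: "'l::finite \<Rightarrow> 'n::finite \<times> nat"
  assumes S: "open S" and eid: "\<And>k w. w \<in> S \<Longrightarrow> e w $ k = (\<Sum>q\<in>UNIV. (if fst (I q) = k then 1 else 0) *
            ((-1)^(snd (I q)) * (deriv^^(snd (I q))) (\<lambda>u. ebar u $ q) w))"
    and ebs: "\<And>q. sm S (\<lambda>u. ebar u $ q)" and w: "w \<in> S"
  shows "Jop m P e w $ i = (\<Sum>q\<in>UNIV. \<Sum>j\<le>m. P j $ i $ fst (I q) *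
      Dz j (\<lambda>w'. (-1) ^ snd (I q) * Dz (snd (I q)) (\<lambda>u. ebar u $ q) w') w)"
proof -
  define X where "X j q = (-1)^(snd (I q)) * (deriv^^j) ((deriv^^(snd (I q))) (\<lambda>u. ebar u $ q)) w" for j q
  have d1: "(deriv^^j) (\<lambda>w. e w $ k) w = (\<Sum>q\<in>UNIV. (if fst (I q) = k then 1 else 0) * X j q)" for j k
  proof -
    have "(deriv^^j) (\<lambda>w. e w $ k) w = (deriv^^j) (\<lambda>w. \<Sum>q\<in>UNIV. (if fst (I q) = k then 1 else 0) *
            ((-1)^(snd (I q)) * (deriv^^(snd (I q))) (\<lambda>u. ebar u $ q) w)) w"
      by (rule funpow_eq_open[OF S _ w]) (rule eid)
    also have "\<dots> = (\<Sum>q\<in>UNIV. (deriv^^j) (\<lambda>w. (if fst (I q) = k then 1 else 0) *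
            ((-1)^(snd (I q)) * (deriv^^(snd (I q))) (\<lambda>u. ebar u $ q) w)) w)"
      by (rule fp_sum[OF _ S _ w]) (auto intro!: sm_cmult[OF S] sm_funpow ebs sm_const)
    also have "\<dots> = (\<Sum>q\<in>UNIV. (if fst (I q) = k then 1 else 0) * X j q)"
    proof (rule sum.cong[OF refl])
      fix q
      have "(deriv^^j) (\<lambda>w. (if fst (I q) = k then 1 else 0) *
            ((-1)^(snd (I q)) * (deriv^^(snd (I q))) (\<lambda>u. ebar u $ q) w)) w =
          (if fst (I q) = k then 1 else 0) * (deriv^^j) (\<lambda>w. (-1)^(snd (I q)) * (deriv^^(snd (I q))) (\<lambda>u. ebar u $ q) w) w"
        by (rule fp_cmult[OF S _ w]) (auto intro!: sm_cmult[OF S] sm_funpow ebs)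
      also have "(deriv^^j) (\<lambda>w. (-1)^(snd (I q)) * (deriv^^(snd (I q))) (\<lambda>u. ebar u $ q) w) w = X j q"
        unfolding X_def by (rule fp_cmult[OF S _ w]) (auto intro!: sm_funpow ebs)
      finally show "(deriv^^j) (\<lambda>w. (if fst (I q) = k then 1 else 0) *
            ((-1)^(snd (I q)) * (deriv^^(snd (I q))) (\<lambda>u. ebar u $ q) w)) w = (if fst (I q) = k then 1 else 0) * X j q" .
    qed
    finally show ?thesis .
  qed
  have d2: "Dz j (\<lambda>w'. (-1) ^ snd (I q) * Dz (snd (I q)) (\<lambda>u. ebar u $ q) w') w = X j q" for j q
    unfolding Dz_def X_def by (rule fp_cmult[OF S _ w]) (auto intro!: sm_funpow ebs)
  have "Jop m P e w $ i = (\<Sum>j\<le>m. \<Sum>k\<in>UNIV. P j $ i $ k * (deriv^^j) (\<lambda>w. e w $ k) w)"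
    by (simp add: Jop_def Dz_def matrix_vector_mult_def sum_component)
  also have "\<dots> = (\<Sum>j\<le>m. \<Sum>q\<in>UNIV. P j $ i $ fst (I q) * X j q)"
    unfolding d1 by (simp only: regroup)
  also have "\<dots> = (\<Sum>q\<in>UNIV. \<Sum>j\<le>m. P j $ i $ fst (I q) * X j q)"
    by (rule sum.swap)
  finally show ?thesis unfolding d2 .
qed

lemma G1:
  fixes e ebar :: "real \<Rightarrow> real^_" and I :: "'l::finite \<Rightarrow> 'n::finite \<times> nat"
  assumes S: "open S" and eid: "\<And>k w. w \<in> S \<Longrightarrow> e w $ k = (\<Sum>q\<in>UNIV. (if fst (I q) = k then 1 else 0) *
            ((-1)^(snd (I q)) * (deriv^^(snd (I q))) (\<lambda>u. ebar u $ q) w))"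
    and w: "w \<in> S"
  shows "Gadj mg G e w = GGadj mg G I ebar w"
proof -
  have inner: "(transpose (G k) *v e w') $ r = (\<Sum>p\<in>UNIV. G k $ fst (I p) $ r * ((-1) ^ snd (I p) * Dz (snd (I p)) (\<lambda>u. ebar u $ p) w'))"
    if "w' \<in> S" for k r w'
  proof -
    have "(transpose (G k) *v e w') $ r = (\<Sum>i\<in>UNIV. G k $ i $ r * e w' $ i)"
      by (simp add: matrix_vector_mult_def transpose_def)
    also have "\<dots> = (\<Sum>p\<in>UNIV. G k $ fst (I p) $ r * ((-1) ^ snd (I p) * (deriv^^(snd (I p))) (\<lambda>u. ebar u $ p) w'))"
      unfolding eid[OF that] by (rule regroup)
    finally show ?thesis by (simp add: Dz_def)
  qed
  show ?thesis
  proof (subst vec_eq_iff, intro allI)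
    fix r
    have "Gadj mg G e w $ r = (\<Sum>k\<le>mg. (-1) ^ k * (deriv^^k) (\<lambda>w. (transpose (G k) *v e w) $ r) w)"
      by (simp add: Gadj_def Dz_def sum_component)
    also have "\<dots> = (\<Sum>k\<le>mg. (-1) ^ k * (deriv^^k) (\<lambda>w. \<Sum>p\<in>UNIV. G k $ fst (I p) $ r * ((-1) ^ snd (I p) * Dz (snd (I p)) (\<lambda>u. ebar u $ p) w)) w)"
      by (intro sum.cong refl arg_cong2[where f="(*)"] funpow_eq_open[OF S _ w] inner)
    also have "\<dots> = GGadj mg G I ebar w $ r"
      by (simp add: GGadj_def Dz_def)
    finally show "Gadj mg G e w $ r = GGadj mg G I ebar w $ r" .
  qed
qed


theorem proposition5:
  fixes a b :: real and T Z :: "real set"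
    and m mg md :: nat
    and I :: "'l::{finite,linorder} \<Rightarrow> 'n::finite \<times> nat"
    and P :: "nat \<Rightarrow> real ^ 'n::finite ^ 'n::finite"
    and G :: "nat \<Rightarrow> real ^ 'd::finite ^ 'n::finite"
    and R :: "real \<Rightarrow> real ^ 'd::finite ^ 'd::finite"
    and H :: "real ^ 'l::{finite,linorder} \<Rightarrow> real"
    and x e :: "real \<Rightarrow> real \<Rightarrow> real ^ 'n::finite"
  assumes ab: "a < b"
    and P_sym: "\<forall>j\<le>m. P j = (-1) ^ (j + 1) *\<^sub>R transpose (P j)"
    and R_smooth: "\<forall>r s. Cinf_on {a..b} (\<lambda>z. R z $ r $ s)"
    and R_pos: "\<forall>f::real \<Rightarrow> real ^ 'd::finite. L2_on a b f \<longrightarrow> integral {a..b} (\<lambda>z. f z \<bullet> (R z *v f z)) \<ge> 0"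
    and I_inj: "inj I"
    and I_range: "\<forall>p. snd (I p) \<le> md"
    and I_sorted: "mono (\<lambda>p. snd (I p))"
    and H_smooth: "Cinf_Rl H"
    and T_open: "open T" and Z_open: "open Z" and Z_ab: "{a..b} \<subseteq> Z"
    and x_smooth: "\<forall>i. Cinf2_on (T \<times> Z) (\<lambda>t z. x t z $ i)"
    and e_var: "\<forall>t\<in>T. is_var_deriv a b (Hfun a b I H) (x t) (e t)"
    and e_cont: "\<forall>t\<in>T. continuous_on {a..b} (e t)"
    and x_sol: "\<forall>t\<in>T. \<forall>z\<in>{a<..<b}. ((\<lambda>s. x s z) has_vector_derivative
                  (Jop m P (e t) z - Gop mg G (Rmul R (Gadj mg G (e t))) z)) (at t)"
  shows "(\<forall>t\<in>T. \<forall>z\<in>{a<..<b}.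
            ((\<lambda>s. xbar I (x s) z) has_vector_derivative
              (let ebar = (\<lambda>w. \<chi> p. pdH H p (xbar I (x t) w))
               in JJop m P I ebar z - GGop mg G I (Rmul R (GGadj mg G I ebar)) z)) (at t))
       \<and> (\<forall>u v :: real \<Rightarrow> real ^ 'l::{finite,linorder}. (\<forall>p. test_fun a b (\<lambda>z. u z $ p)) \<longrightarrow>
            (\<forall>p. test_fun a b (\<lambda>z. v z $ p)) \<longrightarrow>
            integral {a..b} (\<lambda>z. u z \<bullet> JJop m P I v z) = - integral {a..b} (\<lambda>z. JJop m P I u z \<bullet> v z))"
proof -
  obtain D where DH: "D [] = H"
    and pd: "\<forall>ds y p. ((\<lambda>s. D ds (y + s *\<^sub>R axis p 1)) has_real_derivative D (p # ds) y) (at 0)"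
    and Dc: "\<forall>ds. continuous_on UNIV (D ds)"
    using H_smooth unfolding Cinf_Rl_def by blast
  have "\<forall>i. \<exists>DD. DD 0 0 = (\<lambda>t z. x t z $ i) \<and> (\<forall>p q. \<forall>y\<in>T \<times> Z. ((\<lambda>w. DD p q (fst w) (snd w)) has_derivative
        (\<lambda>h. fst h * DD (Suc p) q (fst y) (snd y) + snd h * DD p (Suc q) (fst y) (snd y))) (at y))"
    using x_smooth unfolding Cinf2_on_def by blast
  then obtain DX where DXall: "\<forall>i. DX i 0 0 = (\<lambda>t z. x t z $ i) \<and> (\<forall>p q. \<forall>y\<in>T \<times> Z. ((\<lambda>w. DX i p q (fst w) (snd w)) has_derivative
        (\<lambda>h. fst h * DX i (Suc p) q (fst y) (snd y) + snd h * DX i p (Suc q) (fst y) (snd y))) (at y))"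
    by (rule choice[THEN exE]) blast
  have DX0: "\<And>i. DX i 0 0 = (\<lambda>t z. x t z $ i)" using DXall by blast
  have DXd: "\<And>i. \<forall>p q. \<forall>y\<in>T \<times> Z. ((\<lambda>w. DX i p q (fst w) (snd w)) has_derivative
        (\<lambda>h. fst h * DX i (Suc p) q (fst y) (snd y) + snd h * DX i p (Suc q) (fst y) (snd y))) (at y)"
    using DXall by blast
  have dz: "((\<lambda>w. DX i p q s w) has_real_derivative DX i p (Suc q) s w) (at w)" if "s \<in> T" "w \<in> Z" for i p q s w
    by (rule cinf2_parts(1)[OF DXd]) (use that in auto)
  have dt: "((\<lambda>s. DX i p q s w) has_real_derivative DX i (Suc p) q s w) (at s)" if "s \<in> T" "w \<in> Z" for i p q s w
    by (rule cinf2_parts(2)[OF DXd]) (use that in auto)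
  have Xsm: "sm Z (\<lambda>w. x s w $ i)" if "s \<in> T" for s i
    using sm_from_D(1)[OF Z_open, of "\<lambda>k. DX i 0 k s" "\<lambda>w. x s w $ i"] dz[OF that] DX0 by auto
  have Xfp: "(deriv^^k) (\<lambda>w. x s w $ i) w = DX i 0 k s w" if "s \<in> T" "w \<in> Z" for s i k w
    using sm_from_D(2)[OF Z_open, of "\<lambda>k. DX i 0 k s" "\<lambda>w. x s w $ i"] dz[OF that(1)] DX0 that(2) by auto
  have X1sm: "sm Z (\<lambda>w. DX i (Suc 0) 0 t w)" if "t \<in> T" for t i
    using sm_from_D(1)[OF Z_open, of "\<lambda>k. DX i (Suc 0) k t" "\<lambda>w. DX i (Suc 0) 0 t w"] dz[OF that] by auto
  have X1fp: "(deriv^^k) (\<lambda>w. DX i (Suc 0) 0 t w) w = DX i (Suc 0) k t w" if "t \<in> T" "w \<in> Z" for t i k w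
    using sm_from_D(2)[OF Z_open, of "\<lambda>k. DX i (Suc 0) k t" "\<lambda>w. DX i (Suc 0) 0 t w"] dz[OF that(1)] that(2) by auto
  have pdH_eq: "pdH H q y = D [q] y" for q y
  proof -
    have "((\<lambda>s. D [] (y + s *\<^sub>R axis q 1)) has_real_derivative D [q] y) (at 0)" using pd by blast
    then show ?thesis unfolding pdH_def DH[symmetric] by (rule DERIV_imp_deriv)
  qed
  have S0: "open {a<..<b}" "{a<..<b} \<subseteq> Z" using Z_ab by auto
  have part1: "((\<lambda>s. xbar I (x s) z) has_vector_derivative
              (let ebar = (\<lambda>w. \<chi> p. pdH H p (xbar I (x t) w))
               in JJop m P I ebar z - GGop mg G I (Rmul R (GGadj mg G I ebar)) z)) (at t)"
    if t: "t \<in> T" and z: "z \<in> {a<..<b}" for t z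
  proof -
    define ebar where "ebar = (\<lambda>w. \<chi> p. pdH H p (xbar I (x t) w))"
    have ebar_c: "(\<lambda>u. ebar u $ q) = (\<lambda>u. D [q] (xbar I (x t) u))" for q
      by (simp add: ebar_def pdH_eq)
    have Ys: "sm Z (\<lambda>u. xbar I (x t) u $ p)" for p
    proof -
      have "(\<lambda>u. xbar I (x t) u $ p) = (deriv^^(snd (I p))) (\<lambda>w. x t w $ fst (I p))"
        by (rule ext) (simp add: xbar_def Dz_def)
      then show ?thesis using sm_funpow[OF Xsm[OF t]] by simp
    qed
    have ebs: "sm Z (\<lambda>u. ebar u $ q)" for q
      unfolding ebar_c by (rule sm_H[OF pd Dc Z_open Ys])
    have ebs0: "sm {a<..<b} (\<lambda>u. ebar u $ q)" for q by (rule sm_subset[OF S0(2) ebs])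
    have eid: "e t w $ k = (\<Sum>q\<in>UNIV. (if fst (I q) = k then 1 else 0) *
            ((-1)^(snd (I q)) * (deriv^^(snd (I q))) (\<lambda>u. ebar u $ q) w))" if "w \<in> {a<..<b}" for k w
      unfolding ebar_c
      by (rule E_ident[OF ab Z_open Z_ab DH pd Dc Xsm[OF t] e_var[rule_format, OF t] e_cont[rule_format, OF t] that])
    define V where "V w = Jop m P (e t) w - Gop mg G (Rmul R (Gadj mg G (e t))) w" for w
    have dtV: "DX i (Suc 0) 0 t w = V w $ i" if "w \<in> {a<..<b}" for i w
    proof -
      have "((\<lambda>s. x s w $ i) has_real_derivative V w $ i) (at t)"
        by (rule vec_comp_deriv) (use x_sol t that in \<open>auto simp: V_def\<close>)
      moreover have "((\<lambda>s. x s w $ i) has_real_derivative DX i (Suc 0) 0 t w) (at t)"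
        using dt[OF t, where w=w and i=i and p=0 and q=0] that S0 DX0 by auto
      ultimately show ?thesis using DERIV_unique by blast
    qed
    have comp: "DX (fst (I p)) (Suc 0) (snd (I p)) t z =
        (JJop m P I ebar z - GGop mg G I (Rmul R (GGadj mg G I ebar)) z) $ p" for p
    proof -
      define i where "i = fst (I p)"
      define jp where "jp = snd (I p)"
      define A where "A = (\<lambda>w. \<Sum>q\<in>UNIV. \<Sum>j\<le>m. P j $ i $ fst (I q) *
          Dz j (\<lambda>w'. (-1) ^ snd (I q) * Dz (snd (I q)) (\<lambda>u. ebar u $ q) w') w)"
      define Bq where "Bq = (\<lambda>w. \<Sum>k\<le>mg. \<Sum>r\<in>UNIV. G k $ i $ r * Dz k (\<lambda>w'. Rmul R (GGadj mg G I ebar) w' $ r) w)"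
      have JJc: "JJop m P I ebar z $ p = (deriv^^jp) A z"
        by (simp add: JJop_def Dz_def A_def i_def jp_def)
      have GGc: "GGop mg G I (Rmul R (GGadj mg G I ebar)) z $ p = (deriv^^jp) Bq z"
        by (simp add: GGop_def Dz_def Bq_def i_def jp_def)
      have JA: "Jop m P (e t) w $ i = A w" if "w \<in> {a<..<b}" for w
        unfolding A_def by (rule J1[OF S0(1) eid ebs0 that])
      have GB: "Gop mg G (Rmul R (Gadj mg G (e t))) w $ i = Bq w" if "w \<in> {a<..<b}" for w
      proof -
        have RR: "Rmul R (Gadj mg G (e t)) w' = Rmul R (GGadj mg G I ebar) w'" if "w' \<in> {a<..<b}" for w'
          unfolding Rmul_def using G1[OF S0(1) eid that, where mg=mg and G=G] by simp
        have "Gop mg G (Rmul R (Gadj mg G (e t))) w $ i =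
            (\<Sum>k\<le>mg. \<Sum>r\<in>UNIV. G k $ i $ r * (deriv^^k) (\<lambda>w'. Rmul R (Gadj mg G (e t)) w' $ r) w)"
          by (simp add: Gop_def Dz_def matrix_vector_mult_def sum_component)
        also have "\<dots> = (\<Sum>k\<le>mg. \<Sum>r\<in>UNIV. G k $ i $ r * (deriv^^k) (\<lambda>w'. Rmul R (GGadj mg G I ebar) w' $ r) w)"
          by (intro sum.cong refl arg_cong2[where f="(*)"] funpow_eq_open[OF S0(1) _ that]) (simp add: RR)
        finally show ?thesis by (simp add: Bq_def Dz_def)
      qed
      have As: "sm {a<..<b} A"
        unfolding A_def Dz_def
        by (intro sm_sum[OF _ S0(1)] sm_cmult[OF S0(1)] sm_funpow ebs0) simp_all
      have Vs: "sm {a<..<b} (\<lambda>w. V w $ i)"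
        by (rule sm_cong[OF S0(1) dtV sm_subset[OF S0(2) X1sm[OF t]]])
      have VAB: "V w $ i = A w - Bq w" if "w \<in> {a<..<b}" for w
        using JA[OF that] GB[OF that] by (simp add: V_def)
      have Bs: "sm {a<..<b} Bq"
        by (rule sm_cong[OF S0(1) _ sm_diff[OF S0(1) As Vs]]) (simp add: VAB)
      have "DX i (Suc 0) jp t z = (deriv^^jp) (\<lambda>w. DX i (Suc 0) 0 t w) z"
        using X1fp[OF t, where w=z and i=i and k=jp] z S0 by auto
      also have "\<dots> = (deriv^^jp) (\<lambda>w. V w $ i) z"
        by (rule funpow_eq_open[OF S0(1) dtV z])
      also have "\<dots> = (deriv^^jp) (\<lambda>w. A w - Bq w) z"
        by (rule funpow_eq_open[OF S0(1) VAB z])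
      also have "\<dots> = (deriv^^jp) A z - (deriv^^jp) Bq z"
        by (rule fp_diff[OF S0(1) As Bs z])
      finally show ?thesis using JJc GGc by (simp add: i_def jp_def)
    qed
    have xb: "xbar I (x s) z $ p = DX (fst (I p)) 0 (snd (I p)) s z" if "s \<in> T" for s p
      using Xfp[OF that, where w=z] z S0 by (auto simp: xbar_def Dz_def)
    have hv: "((\<lambda>s. xbar I (x s) z) has_vector_derivative (\<chi> p. DX (fst (I p)) (Suc 0) (snd (I p)) t z)) (at t)"
    proof (rule vec_has_vector_derivative)
      fix p
      have "((\<lambda>s. DX (fst (I p)) 0 (snd (I p)) s z) has_real_derivative DX (fst (I p)) (Suc 0) (snd (I p)) t z) (at t)"
        using dt[OF t, where w=z] z S0 by auto
      then have "((\<lambda>s. xbar I (x s) z $ p) has_real_derivative DX (fst (I p)) (Suc 0) (snd (I p)) t z) (at t)"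
        by (rule has_field_derivative_transform_within_open[OF _ T_open t]) (simp add: xb)
      then show "((\<lambda>s. xbar I (x s) z $ p) has_real_derivative (\<chi> p. DX (fst (I p)) (Suc 0) (snd (I p)) t z) $ p) (at t)"
        by simp
    qed
    have "(\<chi> p. DX (fst (I p)) (Suc 0) (snd (I p)) t z) = JJop m P I ebar z - GGop mg G I (Rmul R (GGadj mg G I ebar)) z"
      by (simp add: vec_eq_iff comp)
    then show ?thesis using hv by (simp add: ebar_def Let_def)
  qed
  have part2: "integral {a..b} (\<lambda>z. u z \<bullet> JJop m P I v z) = - integral {a..b} (\<lambda>z. JJop m P I u z \<bullet> v z)"
    if "\<forall>p. test_fun a b (\<lambda>z. u z $ p)" "\<forall>p. test_fun a b (\<lambda>z. v z $ p)" for u v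
    by (rule skew[OF P_sym that]) (use ab in simp)
  show ?thesis using part1 part2 by blast
qed


end
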